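(* Let $\alpha$ be a positive integer, $\gamma$ a positive integer, and $\varepsilon\in\{1,-1\}$. Let $F(z)$ be a formal power series with integer coefficients satisfying $$c_2(z)F^2(z)+c_1(z)F(z)+c_0(z)+3\,\mathcal Q\bigl(z;F(z),F'(z),\dots,F^{(s)}(z)\bigr)=0,$$ where $c_0,c_1,c_2\in\mathbb Z[z]$ and: (1) $c_2(z)\equiv z^{e_1}(1+\varepsilon z^\gamma)^{e_2}$ modulo $3$ for some non-negative integers $e_1,e_2$; (2) $c_1^2(z)-c_0(z)c_2(z)\equiv z^{2f_1}(1+\varepsilon z^\gamma)^{2f_2+1}$ modulo $3$ for some non-negative integers $f_1,f_2$; (3) $\mathcal Q$ is a polynomial with integer coefficients; (4) the equation determines its power series solution uniquely modulo $3^{3^\alpha}$, i.e. any two formal power series with integer coefficients that satisfy the equation modulo $3^{3^\alpha}$ agree modulo $3^{3^\alpha}$. Then there exist $a_0(z),\dots,a_{2\cdot3^\alpha-1}(z)\in\mathbb Z[z,z^{-1},(1+\varepsilon z^\gamma)^{-1}]$ such that $$F(z)=\sum_{i=0}^{2\cdot3^\alpha-1}a_i(z)\Psi^i(\varepsilon z^\gamma)\quad\text{modulo }3^{3^\alpha}.$$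
   Context: $\Psi(z)=\prod_{j\ge0}(1+z^{3^j})$, so $\Psi(\varepsilon z^\gamma)=\prod_{j\ge0}(1+(\varepsilon z^\gamma)^{3^j})$. Congruences "modulo $3^e$" between integral (Laurent) series in $z$ are coefficientwise; rational functions are expanded as Laurent series in $z$. *)

theory Defs
  imports "HOL-Computational_Algebra.Computational_Algebra" "HOL-Number_Theory.Cong"
begin

definition poly_cong :: "int \<Rightarrow> int poly \<Rightarrow> int poly \<Rightarrow> bool" where
  "poly_cong m p q \<longleftrightarrow> (\<forall>n. [coeff p n = coeff q n] (mod m))"

definition fps_cong :: "int \<Rightarrow> int fps \<Rightarrow> int fps \<Rightarrow> bool" where
  "fps_cong m f g \<longleftrightarrow> (\<forall>n. [f $ n = g $ n] (mod m))"

definition fls_cong :: "int \<Rightarrow> int fls \<Rightarrow> int fls \<Rightarrow> bool" where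
  "fls_cong m f g \<longleftrightarrow> (\<forall>n::int. [fls_nth f n = fls_nth g n] (mod m))"

definition lin :: "int \<Rightarrow> nat \<Rightarrow> int poly" where
  "lin eps gam = 1 + monom eps gam"

text \<open>The power series expansion of (1 + eps z^gamma)^(-1), gamma > 0:
  the sum over k of (- eps z^gamma)^k.\<close>
definition inv_lin :: "int \<Rightarrow> nat \<Rightarrow> int fps" where
  "inv_lin eps gam = Abs_fps (\<lambda>n. if gam dvd n then (- eps) ^ (n div gam) else 0)"

text \<open>Psi(eps z^gamma) = prod_{j>=0} (1 + (eps z^gamma)^(3^j)) as a power series
  (gamma > 0): the n-th coefficient is that of the finite partial product over
  j \<le> n, which is already stable since gamma 3^j > n for j > n.\<close>
definition psi :: "int \<Rightarrow> nat \<Rightarrow> int fps" where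
  "psi eps gam = Abs_fps (\<lambda>n.
      (\<Prod>j<Suc n. 1 + (fps_const eps * fps_X ^ gam) ^ (3 ^ j)) $ n)"

text \<open>A polynomial Q(z; y_0, ..., y_s) with integer coefficients, given as a list of
  monomials (c, e, [d_0, ..., d_k]) standing for c z^e y_0^d_0 ... y_k^d_k.\<close>
type_synonym intpolyQ = "(int \<times> nat \<times> nat list) list"

definition Qeval :: "intpolyQ \<Rightarrow> int fps \<Rightarrow> int fps" where
  "Qeval Q G = (\<Sum>(c, e, ds) \<leftarrow> Q.
      fps_const c * fps_X ^ e * (\<Prod>j<length ds. ((fps_deriv ^^ j) G) ^ (ds ! j)))"

definition eqn_lhs :: "int poly \<Rightarrow> int poly \<Rightarrow> int poly \<Rightarrow> intpolyQ \<Rightarrow> int fps \<Rightarrow> int fps" where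
  "eqn_lhs c2 c1 c0 Q G =
     fps_of_poly c2 * G ^ 2 + fps_of_poly c1 * G + fps_of_poly c0 + 3 * Qeval Q G"

end

theory Submission
  imports Defs
begin

unbundle fps_syntax

fun bb :: "nat \<Rightarrow> int" where
  "bb n = (if n = 0 then 1 else if n mod 3 = 2 then 0 else bb (n div 3))"

declare bb.simps[simp del]

lemma bb_rec: "bb n = (if n mod 3 = 2 then 0 else bb (n div 3))"
  by (cases "n = 0") (simp_all add: bb.simps[of n])

lemma bb0[simp]: "bb 0 = 1" by (simp add: bb.simps)
lemma b1: "bb 1 = 1" using bb_rec[of 1] by simp
lemma b2: "bb 2 = 0" using bb_rec[of 2] by simp

lemma bb_digit:
  "(3^K \<le> t \<and> t < 2*3^K \<longrightarrow> bb t = bb (t - 3^K)) \<and> (2*3^K \<le> t \<and> t < 3^Suc K \<longrightarrow> bb t = 0)"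
proof (induction K arbitrary: t)
  case 0
  show ?case
  proof (intro conjI impI)
    assume "3^0 \<le> t \<and> t < 2*3^0"
    then have "t = 1" by simp
    then show "bb t = bb (t - 3^0)" using b1 by simp
  next
    assume "2*3^0 \<le> t \<and> t < 3^Suc 0"
    then have "t = 2" by simp
    then show "bb t = 0" using b2 by simp
  qed
next
  case (Suc K)
  have A: "bb t = bb (t - 3^Suc K)" if "3^Suc K \<le> t" "t < 2*3^Suc K"
  proof -
    define t' where "t' = t - 3*3^K"
    have t': "t = t' + 3*3^K" using that(1) unfolding t'_def by simp
    have d: "t div 3 = t' div 3 + 3^K" "t mod 3 = t' mod 3" using t' by simp_all
    have "3^K \<le> t div 3" "t div 3 < 2*3^K" using that d t' by auto
    then have "bb (t div 3) = bb (t div 3 - 3^K)" using Suc[of "t div 3"] by blast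
    then have "bb (t div 3) = bb (t' div 3)" using d by simp
    then have e: "bb (t div 3) = bb (t' div 3)" .
    have "bb t = (if t mod 3 = 2 then 0 else bb (t div 3))" by (rule bb_rec)
    also have "\<dots> = (if t' mod 3 = 2 then 0 else bb (t' div 3))" by (simp only: d(2) e)
    also have "\<dots> = bb t'" by (rule bb_rec[symmetric])
    finally show ?thesis unfolding t'_def by simp
  qed
  have B: "bb t = 0" if "2*3^Suc K \<le> t" "t < 3^Suc (Suc K)"
  proof -
    have "2*3^K \<le> t div 3" "t div 3 < 3^Suc K" using that by auto
    then have "bb (t div 3) = 0" using Suc[of "t div 3"] by blast
    then show ?thesis by (subst bb_rec) simp
  qed
  show ?case using A B by blast
qed
definition xps :: "int \<Rightarrow> nat \<Rightarrow> int fps" where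
  "xps e g = fps_const e * fps_X ^ g"

lemma xps_power: "xps e g ^ k = xps (e^k) (g*k)"
  unfolding xps_def by (simp only: power_mult_distrib fps_const_power power_mult)

lemma prod_psi_nth:
  assumes "g > 0"
  shows "(\<Prod>j<K. 1 + xps e g ^ (3^j)) $ n =
     (if g dvd n \<and> n div g < 3^K then e^(n div g) * bb (n div g) else 0)"
proof (induction K arbitrary: n)
  case 0
  then show ?case using assms by (auto elim!: dvdE)
next
  case (Suc K)
  let ?f = "\<Prod>j<K. 1 + xps e g ^ (3^j)"
  let ?s = "g * 3^K"
  have "(\<Prod>j<Suc K. 1 + xps e g ^ (3^j)) = ?f * (1 + xps e g ^ (3^K))"
    by (simp only: prod.lessThan_Suc)
  also have "\<dots> = ?f + fps_const (e^3^K) * (fps_X ^ ?s * ?f)"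
  proof -
    have "xps e g ^ (3^K) = fps_const (e^3^K) * fps_X^?s" using xps_power[of e g "3^K"] unfolding xps_def .
    then show ?thesis by (simp add: distrib_left mult.commute mult.left_commute)
  qed
  finally have "(\<Prod>j<Suc K. 1 + xps e g ^ (3^j)) = ?f + fps_const (e^3^K) * (fps_X ^ ?s * ?f)" .
  then have eq: "(\<Prod>j<Suc K. 1 + xps e g ^ (3^j)) $ n = ?f $ n + e^3^K * (if n < ?s then 0 else ?f $ (n - ?s))"
    by (simp add: fps_X_power_mult_nth)
  show ?case
  proof (cases "g dvd n")
    case False
    have "\<not> g dvd (n - ?s)" if "\<not> n < ?s" using False that
      by (metis dvd_add_right_iff dvd_mult2 dvd_refl le_add_diff_inverse2 not_less)
    then show ?thesis using eq Suc False by auto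
  next
    case True
    then obtain t where t: "n = g * t" by (auto elim!: dvdE)
    have nd: "n div g = t" using t assms by simp
    show ?thesis
    proof (cases "t < 3^K")
      case True
      then have "n < ?s" using t assms by simp
      then show ?thesis using eq Suc[of n] nd True t by auto
    next
      case False
      have ns: "\<not> n < ?s" using False t assms by simp
      have nsd: "n - ?s = g * (t - 3^K)" using t by (simp add: right_diff_distrib')
      then have nsdiv: "(n - ?s) div g = t - 3^K" "g dvd (n - ?s)" using assms by simp_all
      have f0: "?f $ n = 0" using Suc[of n] nd False by simp
      show ?thesis
      proof (cases "t < 2*3^K")
        case lt2: True
        have a: "t - 3^K < 3^K" using lt2 by simp
        have b: "e ^ 3 ^ K * e ^ (t - 3 ^ K) = e^t" using False by (simp flip: power_add)
        have "?f $ (n - ?s) = e^(t - 3^K) * bb (t - 3^K)" using Suc[of "n-?s"] nsdiv a by simp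
        moreover have c: "bb (t - 3^K) = bb t" using bb_digit[of K t] lt2 False by auto
        ultimately have "(\<Prod>j<Suc K. 1 + xps e g ^ (3^j)) $ n = e^3^K * (e^(t - 3^K) * bb t)"
          using eq f0 ns by simp
        then have "(\<Prod>j<Suc K. 1 + xps e g ^ (3^j)) $ n = e^t * bb t"
          using b by (simp only: mult.assoc[symmetric])
        moreover have "t < 3^Suc K" using lt2 by simp
        ultimately show ?thesis using True nd by simp
      next
        case False2: False
        have "\<not> t - 3^K < 3^K" using False2 by simp
        then have "?f $ (n - ?s) = 0" using Suc[of "n - ?s"] nsdiv by simp
        moreover have "bb t = 0 \<or> \<not> t < 3^Suc K" using bb_digit[of K t] False2 by auto
        ultimately show ?thesis using eq f0 ns nd by auto
      qed
    qed
  qed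
qed

lemma psi_nth:
  assumes "g > 0"
  shows "psi e g $ n = (if g dvd n then e^(n div g) * bb (n div g) else 0)"
proof -
  have "psi e g $ n = (\<Prod>j<Suc n. 1 + xps e g ^ (3^j)) $ n"
    by (simp add: psi_def xps_def)
  also have "\<dots> = (if g dvd n \<and> n div g < 3^Suc n then e^(n div g) * bb (n div g) else 0)"
    by (rule prod_psi_nth[OF assms])
  finally have X: "psi e g $ n = (if g dvd n \<and> n div g < 3^Suc n then e^(n div g) * bb (n div g) else 0)" .
  have "n div g < 3^Suc n"
  proof -
    have "n div g \<le> n" by simp
    also have "n < 3^n" by (induction n) auto
    also have "\<dots> < 3^Suc n" by simp
    finally show ?thesis .
  qed
  with X show ?thesis by (simp split: if_split)
qed

lemma fps_num_mult_nth: "((numeral k :: 'a::comm_semiring_1 fps) * f) $ n = numeral k * f $ n"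
  by (simp add: fps_numeral_fps_const)

lemma psi_funeq:
  assumes "g > 0"
  shows "psi e g = (1 + xps e g) * psi (e^3) (3*g)"
proof (rule fps_ext)
  fix n
  let ?p = "psi (e^3) (3*g)"
  have "((1 + xps e g) * ?p) $ n = ?p $ n + e * (if n < g then 0 else ?p $ (n - g))"
    by (simp add: xps_def distrib_right mult.assoc fps_X_power_mult_nth)
  also have "\<dots> = psi e g $ n"
  proof (cases "g dvd n")
    case False
    have "\<not> 3*g dvd n" using False by (meson dvd_mult_right)
    moreover have "\<not> 3*g dvd (n - g)" if "\<not> n < g"
      using False that by (metis dvd_mult_right le_add_diff_inverse2 not_less dvd_add_right_iff dvd_refl)
    ultimately show ?thesis using False assms by (simp add: psi_nth)
  next
    case True
    then obtain t where t: "n = g * t" by (auto elim!: dvdE)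
    have nd: "n div g = t" using t assms by simp
    have "t mod 3 = 0 \<or> t mod 3 = 1 \<or> t mod 3 = 2" by auto
    then show ?thesis
    proof (elim disjE)
      assume h: "t mod 3 = 0"
      then obtain u where u: "t = 3*u" by auto
      have a: "psi (e^3) (3*g) $ n = e^t * bb t"
      proof -
        have "bb t = bb u" using u by (simp add: bb_rec[of "3*u"])
        moreover have "(e^3)^u = e^t" using u by (simp flip: power_mult)
        ultimately show ?thesis using assms u t by (simp add: psi_nth)
      qed
      have b: "n < g \<or> psi (e^3) (3*g) $ (n - g) = 0"
      proof (cases "n < g")
        case False
        have "\<not> 3*g dvd (n - g)"
        proof
          assume "3*g dvd (n-g)"
          then obtain w where "n - g = 3*g*w" by (auto elim!: dvdE)
          moreover have "n = (n - g) + g" using False by simp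
          ultimately have "n = g*(3*w+1)" by (simp add: algebra_simps)
          then have "g*t = g*(3*w+1)" using t by simp
          then have "t = 3*w + 1" using assms nat_mult_eq_cancel1 by blast
          then show False using h by simp
        qed
        then show ?thesis using assms by (simp add: psi_nth)
      qed simp
      show ?thesis using a b assms True nd by (auto simp: psi_nth)
    next
      assume h: "t mod 3 = 1"
      then obtain u where u: "t = 3*u + 1" by (metis div_mult_mod_eq add.commute mult.commute)
      have a: "psi (e^3) (3*g) $ n = 0"
      proof -
        have "\<not> 3*g dvd n"
        proof
          assume "3*g dvd n"
          then obtain w where "n = 3*g*w" by (auto elim!: dvdE)
          then have "t = 3*w" using t assms by simp
          then show False using h by simp
        qed
        then show ?thesis using assms by (simp add: psi_nth)
      qed
      have ng: "\<not> n < g" using t u assms by simp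
      have nmg: "n - g = 3*g*u" using t u by (simp add: algebra_simps)
      have b: "psi (e^3) (3*g) $ (n - g) = e^(3*u) * bb u"
        using assms nmg by (simp add: psi_nth power_mult)
      have "Suc (3*u) div 3 = u" by simp
      then have c: "bb t = bb u" using u by (simp add: bb_rec[of "Suc (3*u)"])
      have "e * e^(3*u) = e^t" using u by simp
      then show ?thesis using a b c ng assms True nd by (simp add: psi_nth mult.assoc[symmetric])
    next
      assume h: "t mod 3 = 2"
      have a: "psi (e^3) (3*g) $ n = 0"
      proof -
        have "\<not> 3*g dvd n"
        proof
          assume "3*g dvd n"
          then obtain w where "n = 3*g*w" by (auto elim!: dvdE)
          then have "t = 3*w" using t assms by simp
          then show False using h by simp
        qed
        then show ?thesis using assms by (simp add: psi_nth)
      qed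
      have b: "n < g \<or> psi (e^3) (3*g) $ (n - g) = 0"
      proof (cases "n < g")
        case False
        have "\<not> 3*g dvd (n - g)"
        proof
          assume "3*g dvd (n-g)"
          then obtain w where "n - g = 3*g*w" by (auto elim!: dvdE)
          moreover have "n = (n - g) + g" using False by simp
          ultimately have "n = g*(3*w+1)" by (simp add: algebra_simps)
          then have "g*t = g*(3*w+1)" using t by simp
          then have "t = 3*w + 1" using assms nat_mult_eq_cancel1 by blast
          then show False using h by simp
        qed
        then show ?thesis using assms by (simp add: psi_nth)
      qed simp
      have "bb t = 0" using h by (simp add: bb_rec[of t])
      then show ?thesis using a b assms True nd by (auto simp: psi_nth)
    qed
  qed
  finally show "psi e g $ n = ((1 + xps e g) * ?p) $ n" by simp
qed

lemma psi_iter: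
  assumes "g > 0"
  shows "psi e g = (\<Prod>j<K. 1 + xps e g ^ (3^j)) * psi (e^(3^K)) (g * 3^K)"
proof (induction K)
  case 0
  then show ?case by simp
next
  case (Suc K)
  have g: "g * 3^K > 0" using assms by simp
  have "psi (e^(3^K)) (g * 3^K) = (1 + xps (e^(3^K)) (g * 3^K)) * psi ((e^(3^K))^3) (3*(g * 3^K))"
    by (rule psi_funeq[OF g])
  also have "(e^(3^K))^3 = e^(3^Suc K)" by (simp flip: power_mult add: mult.commute)
  also have "3*(g * 3^K) = g * 3^Suc K" by simp
  also have "xps (e^(3^K)) (g * 3^K) = xps e g ^ (3^K)" by (simp add: xps_power)
  finally show ?case using Suc by (simp add: prod.lessThan_Suc mult.assoc)
qed

lemma psi_nth0: "g > 0 \<Longrightarrow> psi e g $ 0 = 1"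
  by (simp add: psi_nth)

lemma psi_low: "g > 0 \<Longrightarrow> 0 < n \<Longrightarrow> n < g \<Longrightarrow> psi e g $ n = 0"
  by (auto simp: psi_nth dest: dvd_imp_le)

lemma psi_nz_dvd: "g > 0 \<Longrightarrow> psi e g $ n \<noteq> 0 \<Longrightarrow> g dvd n"
  by (auto simp: psi_nth split: if_splits)

lemma fps_mult_nth_zero:
  fixes a b :: "'a::comm_semiring_0 fps"
  assumes "\<And>i. i \<le> n \<Longrightarrow> a $ i = 0"
  shows "(a * b) $ n = 0"
  using assms by (simp add: fps_mult_nth)

lemma frob_prod:
  fixes e :: int
  shows "\<exists>w. (1 + xps e g) * (\<Prod>j<K. 1 + xps e g ^ (3^j))^2 = 1 + xps e g ^ (3^K) + 3 * w"
proof (induction K)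
  case 0
  show ?case by (rule exI[of _ 0]) simp
next
  case (Suc K)
  then obtain w where w: "(1 + xps e g) * (\<Prod>j<K. 1 + xps e g ^ (3^j))^2 = 1 + xps e g ^ (3^K) + 3 * w" by blast
  let ?y = "xps e g ^ (3^K)"
  have "(1 + xps e g) * (\<Prod>j<Suc K. 1 + xps e g ^ (3^j))^2
      = ((1 + xps e g) * (\<Prod>j<K. 1 + xps e g ^ (3^j))^2) * (1 + ?y)^2"
    by (simp add: prod.lessThan_Suc power_mult_distrib)
  also have "\<dots> = 1 + ?y^3 + 3 * (?y + ?y^2 + w * (1+?y)^2)"
    unfolding w by (simp add: algebra_simps power2_eq_square power3_eq_cube)
  also have "?y^3 = xps e g ^ (3^Suc K)" by (simp flip: power_mult add: mult.commute)
  finally show ?case by blast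
qed

lemma v_fps_dvd:
  assumes "g > 0"
  shows "3 dvd ((1 + xps e g) * (psi e g)^2 - 1) $ n"
proof -
  let ?P = "\<Prod>j<n. 1 + xps e g ^ (3^j)"
  let ?q = "psi (e^(3^n)) (g * 3^n)"
  let ?s = "g * 3^n"
  have s: "?s > 0" "n < ?s"
  proof -
    have "n < 3^n" by (induction n) auto
    also have "\<dots> \<le> g * 3^n" using assms by simp
    finally show "n < ?s" .
  qed (use assms in simp)
  obtain w where w: "(1 + xps e g) * ?P^2 = 1 + xps e g ^ (3^n) + 3 * w" using frob_prod by blast
  have "(1 + xps e g) * (psi e g)^2 - 1 = ((1 + xps e g) * ?P^2) * ?q^2 - 1"
    using psi_iter[OF assms, of e n] by (simp add: power_mult_distrib algebra_simps)
  also have "\<dots> = (?q - 1) * (?q + 1) + xps e g ^ (3^n) * ?q^2 + 3 * (w * ?q^2)"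
    unfolding w by (simp add: algebra_simps power2_eq_square)
  finally have eq: "((1 + xps e g) * (psi e g)^2 - 1) $ n
     = ((?q - 1) * (?q + 1)) $ n + (xps e g ^ (3^n) * ?q^2) $ n + 3 * (w * ?q^2) $ n"
    by (simp add: fps_num_mult_nth)
  have z1: "((?q - 1) * (?q + 1)) $ n = 0"
  proof (rule fps_mult_nth_zero)
    fix i assume "i \<le> n"
    then have "i < ?s" using s by linarith
    then show "(?q - 1) $ i = 0" using s psi_nth0[of ?s] psi_low[of ?s i] by (cases "i = 0") auto
  qed
  have z2: "(xps e g ^ (3^n) * ?q^2) $ n = 0"
  proof (rule fps_mult_nth_zero)
    fix i assume "i \<le> n"
    then have "i < ?s" using s by linarith
    then show "(xps e g ^ (3^n)) $ i = 0" unfolding xps_power unfolding xps_def by simp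
  qed
  show ?thesis using eq z1 z2 by (simp add: fps_num_mult_nth)
qed


definition cd :: "int \<Rightarrow> int fls \<Rightarrow> bool" where
  "cd p f \<longleftrightarrow> (\<forall>n. p dvd f $$ n)"

lemma cd_0[simp]: "cd p 0" by (simp add: cd_def)

lemma cd_add: "cd p f \<Longrightarrow> cd p g \<Longrightarrow> cd p (f + g)"
  by (simp add: cd_def)

lemma cd_uminus: "cd p f \<Longrightarrow> cd p (- f)"
  by (simp add: cd_def)

lemma cd_diff: "cd p f \<Longrightarrow> cd p g \<Longrightarrow> cd p (f - g)"
  by (simp add: cd_def)

lemma cd_mult_right: "cd p f \<Longrightarrow> cd p (f * g)"
  unfolding cd_def by (auto simp: fls_times_nth(2) intro!: dvd_sum)

lemma cd_mult_left: "cd p g \<Longrightarrow> cd p (f * g)"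
  using cd_mult_right[of p g f] by (simp add: mult.commute)

lemma cd_of_int_mult: "cd p (of_int p * c)"
  by (simp add: cd_def)

lemma cd_mono: "q dvd p \<Longrightarrow> cd p f \<Longrightarrow> cd q f"
  unfolding cd_def using dvd_trans by blast

lemma cd_deriv: "cd p f \<Longrightarrow> cd p (fls_deriv f)"
  by (simp add: cd_def)

lemma cd_ex:
  assumes "p \<noteq> 0" "cd p f"
  shows "\<exists>c. f = of_int p * c"
proof -
  define c where "c = Abs_fls (\<lambda>n. f $$ n div p)"
  have cn: "c $$ n = f $$ n div p" for n
    unfolding c_def by (rule nth_Abs_fls_ex_lower_bound) (rule exI[of _ "fls_subdegree f"], simp)
  have "f = of_int p * c"
    by (rule fls_eqI) (use assms in \<open>simp add: cn cd_def\<close>)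
  then show ?thesis by blast
qed

lemma cd_cancel:
  assumes "p \<noteq> 0" "cd (p * q) (of_int p * f)"
  shows "cd q f"
  using assms unfolding cd_def by (simp add: mult_dvd_mono)

lemma cd_fps: "cd p (fps_to_fls g) \<longleftrightarrow> (\<forall>n. p dvd g $ n)"
  unfolding cd_def
proof
  assume "\<forall>n. p dvd fps_to_fls g $$ n"
  then show "\<forall>n. p dvd g $ n" by (metis fps_to_fls_nth of_nat_less_0_iff nat_int)
qed simp

lemma cd_domain:
  assumes "cd 3 (a * b)"
  shows "cd 3 a \<or> cd 3 b"
proof (rule ccontr)
  assume "\<not> (cd 3 a \<or> cd 3 b)"
  then obtain na nb where na: "\<not> 3 dvd a $$ na" and nb: "\<not> 3 dvd b $$ nb" by (auto simp: cd_def)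
  define da where "da = fls_subdegree a"
  define db where "db = fls_subdegree b"
  have "na \<ge> da" using na unfolding da_def by (metis dvd_0_right fls_eq0_below_subdegree not_le)
  have "nb \<ge> db" using nb unfolding db_def by (metis dvd_0_right fls_eq0_below_subdegree not_le)
  define ka where "ka = (LEAST k::nat. \<not> 3 dvd a $$ (da + int k))"
  define kb where "kb = (LEAST k::nat. \<not> 3 dvd b $$ (db + int k))"
  have ka: "\<not> 3 dvd a $$ (da + int ka)"
    unfolding ka_def by (rule LeastI[of _ "nat (na - da)"]) (use na \<open>na \<ge> da\<close> in simp)
  have kb: "\<not> 3 dvd b $$ (db + int kb)"
    unfolding kb_def by (rule LeastI[of _ "nat (nb - db)"]) (use nb \<open>nb \<ge> db\<close> in simp)
  have lowa: "3 dvd a $$ i" if "i < da + int ka" for i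
  proof (cases "i < da")
    case True then show ?thesis unfolding da_def by simp
  next
    case False
    then have "nat (i - da) < ka" using that by linarith
    then have "3 dvd a $$ (da + int (nat (i - da)))" unfolding ka_def using not_less_Least by blast
    then show ?thesis using False by simp
  qed
  have lowb: "3 dvd b $$ i" if "i < db + int kb" for i
  proof (cases "i < db")
    case True then show ?thesis unfolding db_def by simp
  next
    case False
    then have "nat (i - db) < kb" using that by linarith
    then have "3 dvd b $$ (db + int (nat (i - db)))" unfolding kb_def using not_less_Least by blast
    then show ?thesis using False by simp
  qed
  define ia where "ia = da + int ka"
  define ib where "ib = db + int kb"
  let ?n = "ia + ib"
  have sum: "(a * b) $$ ?n = (\<Sum>i=da..?n - db. a $$ i * b $$ (?n - i))"
    unfolding da_def db_def by (rule fls_times_nth(2))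
  have mem: "ia \<in> {da..?n - db}" unfolding ia_def ib_def by simp
  have rest: "3 dvd (\<Sum>i\<in>{da..?n - db} - {ia}. a $$ i * b $$ (?n - i))"
  proof (rule dvd_sum)
    fix i assume i: "i \<in> {da..?n - db} - {ia}"
    show "3 dvd a $$ i * b $$ (?n - i)"
    proof (cases "i < ia")
      case True then show ?thesis using lowa unfolding ia_def by simp
    next
      case False
      then have "?n - i < ib" using i by auto
      then show ?thesis using lowb unfolding ib_def by simp
    qed
  qed
  have "(a * b) $$ ?n = a $$ ia * b $$ ib + (\<Sum>i\<in>{da..?n - db} - {ia}. a $$ i * b $$ (?n - i))"
    unfolding sum by (subst sum.remove[OF _ mem]) simp_all
  moreover have "3 dvd (a * b) $$ ?n" using assms by (simp add: cd_def)
  ultimately have "3 dvd a $$ ia * b $$ ib" using rest by (simp add: dvd_add_left_iff)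
  moreover have "prime (3::int)" by simp
  ultimately have "3 dvd a $$ ia \<or> 3 dvd b $$ ib" using prime_dvd_mult_iff by blast
  then show False using ka kb unfolding ia_def ib_def by blast
qed


definition polyf :: "int poly \<Rightarrow> int fls" where
  "polyf p = fps_to_fls (fps_of_poly p)"

lemma polyf_add: "polyf (p + q) = polyf p + polyf q"
  by (simp add: polyf_def fps_of_poly_add)
lemma polyf_mult: "polyf (p * q) = polyf p * polyf q"
  by (simp add: polyf_def fps_of_poly_mult fls_times_fps_to_fls)
lemma polyf_diff: "polyf (p - q) = polyf p - polyf q"
  by (simp add: polyf_def fps_of_poly_diff)
lemma polyf_1[simp]: "polyf 1 = 1" by (simp add: polyf_def)
lemma polyf_power: "polyf (p ^ n) = polyf p ^ n"
  by (induction n) (simp_all add: polyf_mult)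
lemma polyf_monom: "polyf (monom c n) = fls_const c * fls_X ^ n"
  by (simp add: polyf_def fps_of_poly_monom fls_times_fps_to_fls fps_to_fls_power)
lemma polyf_smult: "polyf (smult c p) = fls_const c * polyf p"
  by (simp add: polyf_def fps_of_poly_smult fls_times_fps_to_fls)
lemma polyf_0[simp]: "polyf 0 = 0" by (simp add: polyf_def)
lemma polyf_pCons: "polyf (pCons c p) = fls_const c + polyf p * fls_X"
  by (simp add: polyf_def fps_of_poly_pCons fls_times_fps_to_fls)

lemma fls_deriv_X_power: "fls_deriv (fls_X ^ n :: int fls) = of_nat n * fls_X ^ (n - 1)"
proof (induction n)
  case 0 then show ?case by simp
next
  case (Suc n)
  show ?case
  proof (cases n)
    case 0 then show ?thesis by simp
  next
    case (Suc k)
    have "fls_deriv (fls_X ^ Suc n :: int fls) = fls_X * (of_nat n * fls_X ^ k) + fls_X ^ n"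
      using Suc.IH Suc by (simp add: power_Suc)
    also have "\<dots> = of_nat (Suc n) * fls_X ^ n" using Suc by (simp add: algebra_simps)
    finally show ?thesis by simp
  qed
qed

lemma X_Xi: "(fls_X :: int fls) * fls_X_inv = 1"
  by (simp add: fls_X_times_conv_shift)

lemma fls_const_mult_eq: "fls_const (a::int) * fls_const b = fls_const (a * b)"
  by simp

locale psictx =
  fixes eps :: int and gam :: nat and m :: nat
  assumes gam_pos: "gam > 0" and m_pos: "m > 0"
begin

definition xl :: "nat \<Rightarrow> int fls" where
  "xl j = fls_const (eps^(3^j)) * fls_X^(gam*3^j)"

definition il :: "int fls" where "il = fps_to_fls (inv_lin eps gam)"
definition ps :: "int fls" where "ps = fps_to_fls (psi eps gam)"
definition v :: "int fls" where "v = (1 + xl 0) * ps^2 - 1"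
definition NN :: int where "NN = 3^m"

lemma NN_pos: "NN > 0" by (simp add: NN_def)

lemma xl0: "xl 0 = fls_const eps * fls_X^gam" by (simp add: xl_def)

lemma xps_fls: "fps_to_fls (xps e g) = fls_const e * fls_X^g"
  by (simp add: xps_def fls_times_fps_to_fls fps_to_fls_power)

lemma xl_xps: "xl j = fps_to_fls (xps (eps^(3^j)) (gam*3^j))"
  by (simp add: xl_def xps_fls)

lemma xl_power3: "xl j ^ 3 = xl (Suc j)"
  by (simp add: xl_def power_mult_distrib fls_const_power flip: power_mult) (simp add: ac_simps)

lemma inv_lin_fps: "(1 + xps eps gam) * inv_lin eps gam = 1"
proof (rule fps_ext)
  fix n
  let ?i = "inv_lin eps gam"
  have "((1 + xps eps gam) * ?i) $ n = ?i $ n + eps * (if n < gam then 0 else ?i $ (n - gam))"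
    by (simp add: xps_def distrib_right mult.assoc fps_X_power_mult_nth)
  also have "\<dots> = (1::int fps) $ n"
  proof (cases "n = 0")
    case True then show ?thesis using gam_pos by (simp add: inv_lin_def)
  next
    case False
    show ?thesis
    proof (cases "gam dvd n")
      case True
      then obtain t where t: "n = gam * t" by (auto elim!: dvdE)
      with False have "t > 0" by (cases t) auto
      then have "\<not> n < gam" "n - gam = gam * (t - 1)" using t by (auto simp: algebra_simps)
      moreover have "(- eps) ^ t + eps * (- eps) ^ (t - 1) = 0"
        using \<open>t > 0\<close> by (cases t) auto
      ultimately show ?thesis using t gam_pos False by (simp add: inv_lin_def)
    next
      case nd: False
      have "\<not> gam dvd (n - gam)" if "\<not> n < gam"
        using nd that by (metis dvd_add_right_iff dvd_refl le_add_diff_inverse2 not_less)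
      then show ?thesis using nd False by (simp add: inv_lin_def)
    qed
  qed
  finally show "((1 + xps eps gam) * ?i) $ n = (1::int fps) $ n" .
qed

lemma il_inv: "(1 + xl 0) * il = 1"
proof -
  have "fps_to_fls ((1 + xps eps gam) * inv_lin eps gam) = 1" by (simp add: inv_lin_fps)
  then show ?thesis by (simp add: il_def xl_xps fls_times_fps_to_fls)
qed

lemma v_cd: "cd 3 v"
proof -
  have h: "v = fps_to_fls ((1 + xps eps gam) * (psi eps gam)^2 - 1)"
    by (simp add: v_def ps_def xl_xps fls_times_fps_to_fls fps_to_fls_power)
  show ?thesis unfolding h cd_fps using v_fps_dvd[OF gam_pos] by blast
qed

lemma v3: "\<exists>w. v = 3 * w"
  using cd_ex[OF _ v_cd] by simp

inductive_set R0 :: "int fls set" where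
  R0_const: "fls_const c \<in> R0"
| R0_X: "fls_X \<in> R0"
| R0_Xi: "fls_X_inv \<in> R0"
| R0_il: "il \<in> R0"
| R0_N: "of_int NN * a \<in> R0"
| R0_add: "a \<in> R0 \<Longrightarrow> b \<in> R0 \<Longrightarrow> a + b \<in> R0"
| R0_mult: "a \<in> R0 \<Longrightarrow> b \<in> R0 \<Longrightarrow> a * b \<in> R0"

inductive_set RR :: "int fls set" where
  RR_const: "fls_const c \<in> RR"
| RR_X: "fls_X \<in> RR"
| RR_Xi: "fls_X_inv \<in> RR"
| RR_il: "il \<in> RR"
| RR_N: "of_int NN * a \<in> RR"
| RR_ps: "ps \<in> RR"
| RR_add: "a \<in> RR \<Longrightarrow> b \<in> RR \<Longrightarrow> a + b \<in> RR"
| RR_mult: "a \<in> RR \<Longrightarrow> b \<in> RR \<Longrightarrow> a * b \<in> RR"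

lemma R0_RR: "a \<in> R0 \<Longrightarrow> a \<in> RR"
  by (induction rule: R0.induct) (auto intro: RR.intros)

lemma R0_0[simp]: "0 \<in> R0" using R0_const[of 0] by simp
lemma R0_1[simp]: "1 \<in> R0" using R0_const[of 1] by simp
lemma R0_of_int: "of_int c \<in> R0" using R0_const[of c] by (simp add: fls_of_int)
lemma R0_numeral[simp]: "numeral k \<in> R0" using R0_const[of "numeral k"] by simp
lemma R0_of_nat: "of_nat c \<in> R0" using R0_of_int[of "int c"] by simp
lemma R0_uminus: "a \<in> R0 \<Longrightarrow> - a \<in> R0"
  using R0_mult[OF R0_const[of "-1"]] by (simp add: fls_const_uminus[symmetric])
lemma R0_diff: "a \<in> R0 \<Longrightarrow> b \<in> R0 \<Longrightarrow> a - b \<in> R0"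
  using R0_add R0_uminus by (metis diff_conv_add_uminus)
lemma R0_power: "a \<in> R0 \<Longrightarrow> a ^ n \<in> R0"
  by (induction n) (auto intro: R0_mult)
lemma R0_sum: "(\<And>i. i \<in> A \<Longrightarrow> f i \<in> R0) \<Longrightarrow> sum f A \<in> R0"
  by (induction A rule: infinite_finite_induct) (auto intro: R0_add)
lemma R0_prod: "(\<And>i. i \<in> A \<Longrightarrow> f i \<in> R0) \<Longrightarrow> prod f A \<in> R0"
  by (induction A rule: infinite_finite_induct) (auto intro: R0_mult)
lemma R0_xl: "xl j \<in> R0"
  unfolding xl_def by (intro R0_mult R0_power R0_const R0_X)
lemma R0_polyf: "polyf p \<in> R0"
  by (induction p) (auto simp: polyf_pCons intro!: R0_add R0_mult R0_const R0_X)

lemma RR_0[simp]: "0 \<in> RR" using RR_const[of 0] by simp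
lemma RR_1[simp]: "1 \<in> RR" using RR_const[of 1] by simp
lemma RR_of_int: "of_int c \<in> RR" using RR_const[of c] by (simp add: fls_of_int)
lemma RR_numeral[simp]: "numeral k \<in> RR" using RR_const[of "numeral k"] by simp
lemma RR_uminus: "a \<in> RR \<Longrightarrow> - a \<in> RR"
  using RR_mult[OF RR_const[of "-1"]] by (simp add: fls_const_uminus[symmetric])
lemma RR_diff: "a \<in> RR \<Longrightarrow> b \<in> RR \<Longrightarrow> a - b \<in> RR"
  using RR_add RR_uminus by (metis diff_conv_add_uminus)
lemma RR_power: "a \<in> RR \<Longrightarrow> a ^ n \<in> RR"
  by (induction n) (auto intro: RR_mult)
lemma RR_sum: "(\<And>i. i \<in> A \<Longrightarrow> f i \<in> RR) \<Longrightarrow> sum f A \<in> RR"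
  by (induction A rule: infinite_finite_induct) (auto intro: RR_add)
lemma RR_prod: "(\<And>i. i \<in> A \<Longrightarrow> f i \<in> RR) \<Longrightarrow> prod f A \<in> RR"
  by (induction A rule: infinite_finite_induct) (auto intro: RR_mult)
lemma RR_xl: "xl j \<in> RR" using R0_RR R0_xl by blast
lemma RR_polyf: "polyf p \<in> RR" using R0_RR R0_polyf by blast
lemma RR_v: "v \<in> RR" unfolding v_def by (intro RR_diff RR_mult RR_add RR_power RR_xl RR_ps RR_1)

lemma D_xl: "fls_deriv (xl j) = fls_const (eps^(3^j)) * (of_nat (gam*3^j) * fls_X^(gam*3^j - 1))"
  by (simp only: xl_def fls_deriv_mult_const_left fls_deriv_X_power)

lemma D_il: "fls_deriv il = - (il^2 * fls_deriv (xl 0))"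
proof -
  have "fls_deriv ((1 + xl 0) * il) = 0" by (simp add: il_inv)
  then have "(1 + xl 0) * fls_deriv il + fls_deriv (xl 0) * il = 0" by simp
  then have "il * ((1 + xl 0) * fls_deriv il + fls_deriv (xl 0) * il) = 0" by simp
  then have "((1 + xl 0) * il) * fls_deriv il + il^2 * fls_deriv (xl 0) = 0"
    by (simp add: algebra_simps power2_eq_square)
  then show ?thesis by (simp add: il_inv eq_neg_iff_add_eq_0)
qed

lemma R0_D_xl: "fls_deriv (xl j) \<in> R0"
  unfolding D_xl by (intro R0_mult R0_power R0_const R0_X R0_of_nat)

lemma R0_deriv: "a \<in> R0 \<Longrightarrow> fls_deriv a \<in> R0"
proof (induction rule: R0.induct)
  case (R0_Xi)
  then show ?case by (auto intro!: R0_uminus R0_power R0.intros)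
next
  case R0_il
  then show ?case unfolding D_il by (auto intro!: R0_uminus R0_power R0_mult R0.intros R0_D_xl)
next
  case (R0_N a)
  have "fls_deriv (of_int NN * a) = of_int NN * fls_deriv a" by simp
  then show ?case using R0.R0_N by metis
qed (auto intro: R0.intros)

end


lemma fps_to_fls_prod: "fps_to_fls (prod f A) = (\<Prod>i\<in>A. fps_to_fls (f i) :: int fls)"
  by (induction A rule: infinite_finite_induct) (simp_all add: fls_times_fps_to_fls)

lemma fps_to_fls_sum: "fps_to_fls (sum f A) = (\<Sum>i\<in>A. fps_to_fls (f i) :: int fls)"
  by (induction A rule: infinite_finite_induct) simp_all

context psictx
begin

lemma NN_fls: "(3::int fls) ^ m = of_int NN"
  by (simp add: NN_def)

lemma frob_lin: "\<exists>s \<in> R0. (1 + xl 0)^(3^j) = 1 + xl j + 3 * s"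
proof (induction j)
  case 0
  show ?case by (rule bexI[of _ 0]) simp_all
next
  case (Suc j)
  then obtain s where s: "s \<in> R0" "(1 + xl 0)^(3^j) = 1 + xl j + 3 * s" by blast
  let ?y = "xl j"
  define s' where "s' = ?y + ?y^2 + 3*(1+?y)^2*s + 9*(1+?y)*s^2 + 9*s^3"
  have "s' \<in> R0" unfolding s'_def
    by (intro R0_add R0_mult R0_power R0_xl R0_numeral R0_1 s(1))
  have "(1 + xl 0)^(3^Suc j) = ((1 + xl 0)^(3^j))^3" by (simp flip: power_mult add: mult.commute)
  also have "\<dots> = (1 + ?y + 3 * s)^3" using s(2) by simp
  also have "\<dots> = 1 + ?y^3 + 3 * s'" unfolding s'_def by (simp add: algebra_simps power2_eq_square power3_eq_cube)
  also have "?y^3 = xl (Suc j)" by (rule xl_power3)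
  finally show ?case using \<open>s' \<in> R0\<close> by blast
qed

lemma inv_factor: "\<exists>q \<in> R0. \<exists>a. (1 + xl j) * q = 1 + of_int NN * a"
proof -
  obtain s where s: "s \<in> R0" "(1 + xl 0)^(3^j) = 1 + xl j + 3 * s" using frob_lin by blast
  define u where "u = s * il^(3^j)"
  have "(1 + xl j) * il^(3^j) = ((1 + xl 0)^(3^j) - 3 * s) * il^(3^j)" using s(2) by simp
  also have "\<dots> = ((1 + xl 0) * il)^(3^j) - 3 * u"
    unfolding power_mult_distrib u_def by (simp add: left_diff_distrib mult.assoc)
  finally have e: "(1 + xl j) * il^(3^j) = 1 - 3 * u" by (simp add: il_inv)
  define q where "q = il^(3^j) * (\<Sum>k<m. (3*u)^k)"
  have "q \<in> R0" unfolding q_def u_def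
    by (intro R0_mult R0_power R0_sum R0_numeral R0_il s(1))
  have "(1 + xl j) * q = (1 - 3*u) * (\<Sum>k<m. (3*u)^k)" unfolding q_def e[symmetric] by (simp add: mult.assoc)
  also have "\<dots> = 1 - (3*u)^m" by (rule one_diff_power_eq[symmetric])
  also have "\<dots> = 1 + of_int NN * (- (u ^ m))" by (simp add: power_mult_distrib NN_fls)
  finally show ?thesis using \<open>q \<in> R0\<close> by blast
qed

definition QQ :: "nat \<Rightarrow> int fls" where "QQ n = (\<Prod>j<n. 1 + xl (Suc j))"

lemma QQ_R0: "QQ n \<in> R0"
  unfolding QQ_def by (intro R0_prod R0_add R0_1 R0_xl)

lemma D_xl_Suc: "\<exists>t \<in> R0. fls_deriv (xl (Suc j)) = 3 * t"
proof -
  let ?t = "fls_const (eps^(3^Suc j)) * (of_nat (gam*3^j) * fls_X^(gam*3^Suc j - 1))"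
  have "?t \<in> R0" by (intro R0_mult R0_power R0_const R0_X R0_of_nat)
  moreover have "fls_deriv (xl (Suc j)) = 3 * ?t"
    unfolding D_xl by (simp add: algebra_simps)
  ultimately show ?thesis by blast
qed

lemma QQ_D: "\<exists>T \<in> R0. fls_deriv (QQ n) = 3 * T"
proof (induction n)
  case 0
  show ?case by (rule bexI[of _ 0]) (simp_all add: QQ_def)
next
  case (Suc n)
  then obtain T where T: "T \<in> R0" "fls_deriv (QQ n) = 3 * T" by blast
  obtain t where t: "t \<in> R0" "fls_deriv (xl (Suc n)) = 3 * t" using D_xl_Suc by blast
  have "QQ (Suc n) = QQ n * (1 + xl (Suc n))" by (simp add: QQ_def)
  then have "fls_deriv (QQ (Suc n)) = 3 * (QQ n * t + T * (1 + xl (Suc n)))"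
    using T t by (simp add: algebra_simps)
  moreover have "QQ n * t + T * (1 + xl (Suc n)) \<in> R0"
    by (intro R0_add R0_mult QQ_R0 T(1) t(1) R0_1 R0_xl)
  ultimately show ?case by blast
qed

lemma QQ_inv: "\<exists>q \<in> R0. \<exists>a. QQ n * q = 1 + of_int NN * a"
proof (induction n)
  case 0
  show ?case by (rule bexI[of _ 1]) (auto simp: QQ_def intro: exI[of _ 0])
next
  case (Suc n)
  then obtain q a where q: "q \<in> R0" "QQ n * q = 1 + of_int NN * a" by blast
  obtain q' a' where q': "q' \<in> R0" "(1 + xl (Suc n)) * q' = 1 + of_int NN * a'" using inv_factor by blast
  have "QQ (Suc n) * (q * q') = (QQ n * q) * ((1 + xl (Suc n)) * q')" by (simp add: QQ_def algebra_simps)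
  also have "\<dots> = 1 + of_int NN * (a + a' + of_int NN * a * a')" unfolding q(2) q'(2) by (simp add: algebra_simps)
  finally show ?case using q(1) q'(1) R0_mult by blast
qed

definition psm :: "int fls" where "psm = fps_to_fls (psi (eps^(3^m)) (gam * 3^m))"

lemma ps_decomp: "ps = (1 + xl 0) * QQ (m - 1) * psm"
proof -
  have "psi eps gam = (\<Prod>j<m. 1 + xps eps gam ^ (3^j)) * psi (eps^(3^m)) (gam * 3^m)"
    by (rule psi_iter[OF gam_pos])
  have fac: "fps_to_fls (1 + xps eps gam ^ (3^j)) = 1 + xl j" for j
    by (simp only: fps_to_fls_plus fps_one_to_fls xps_power xl_xps mult.commute)
  have "ps = fps_to_fls (\<Prod>j<m. 1 + xps eps gam ^ (3^j)) * psm"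
    unfolding ps_def psm_def by (subst psi_iter[OF gam_pos, of eps m]) (simp only: fls_times_fps_to_fls)
  then have "ps = (\<Prod>j<m. 1 + xl j) * psm"
    by (simp only: fps_to_fls_prod fac)
  also have "(\<Prod>j<m. 1 + xl j) = (1 + xl 0) * QQ (m - 1)"
  proof -
    have "m = Suc (m - 1)" using m_pos by simp
    then have "(\<Prod>j<m. 1 + xl j) = (\<Prod>j<Suc (m-1). 1 + xl j)" by simp
    also have "\<dots> = (1 + xl 0) * QQ (m - 1)" unfolding QQ_def by (rule prod.lessThan_Suc_shift)
    finally show ?thesis .
  qed
  finally show ?thesis .
qed

lemma psm_D: "\<exists>c. fls_deriv psm = of_int NN * c"
proof -
  define E where "E = eps ^ 3 ^ m"
  define G where "G = gam * 3 ^ m"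
  have G: "G > 0" using gam_pos by (simp add: G_def)
  have dv: "NN dvd fps_deriv (psi E G) $ n" for n
  proof (cases "psi E G $ Suc n = 0")
    case False
    then have "G dvd Suc n" using psi_nz_dvd[OF G] by blast
    then have "3^m dvd Suc n" unfolding G_def by (rule dvd_mult_right)
    then have "int (3^m) dvd int (Suc n)" by (simp only: of_nat_dvd_iff)
    then have "NN dvd int (Suc n)" unfolding NN_def by simp
    then have "NN dvd int (n + 1)" by simp
    then show ?thesis unfolding fps_deriv_nth by (rule dvd_mult2)
  qed simp
  have "cd NN (fls_deriv psm)"
    unfolding psm_def fls_deriv_fps_to_fls cd_fps E_def[symmetric] G_def[symmetric] using dv by blast
  from cd_ex[OF _ this] show ?thesis using NN_pos by simp
qed

lemma D_ps: "\<exists>r \<in> R0. \<exists>c. fls_deriv ps = ps * (fls_deriv (xl 0) * il + 3 * r) + of_int NN * c"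
proof -
  let ?x = "xl 0" and ?Q = "QQ (m - 1)"
  obtain T where T: "T \<in> R0" "fls_deriv ?Q = 3 * T" using QQ_D by blast
  obtain q a where q: "q \<in> R0" "?Q * q = 1 + of_int NN * a" using QQ_inv by blast
  obtain c where c: "fls_deriv psm = of_int NN * c" using psm_D by blast
  have h1: "ps = (1 + ?x) * ?Q * psm" by (rule ps_decomp)
  have h5: "(1 + ?x) * il = 1" by (rule il_inv)
  have Dps: "fls_deriv ps = fls_deriv ?x * ?Q * psm + (1 + ?x) * (3 * T) * psm + (1 + ?x) * ?Q * (of_int NN * c)"
    unfolding h1 using T(2) c by (simp add: algebra_simps)
  have a1: "ps * (fls_deriv ?x * il) = fls_deriv ?x * ?Q * psm * ((1 + ?x) * il)"
    unfolding h1 by (simp add: algebra_simps)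
  have a2: "ps * (3 * (T * q)) = 3 * T * (1 + ?x) * psm * (?Q * q)"
    unfolding h1 by (simp add: algebra_simps)
  have "fls_deriv ps = ps * (fls_deriv ?x * il + 3 * (T * q))
          + of_int NN * ((1 + ?x) * ?Q * c - 3 * T * (1 + ?x) * psm * a)"
    unfolding distrib_left a1 a2 h5 q(2) Dps by (simp add: algebra_simps)
  moreover have "T * q \<in> R0" using T(1) q(1) by (rule R0_mult)
  ultimately show ?thesis by blast
qed

end


lemma fls_deriv_power: "fls_deriv (a ^ Suc n :: int fls) = of_nat (Suc n) * a ^ n * fls_deriv a"
  by (induction n) (simp_all add: algebra_simps)

lemma fls_deriv_sq: "fls_deriv (a ^ 2 :: int fls) = 2 * a * fls_deriv a"
  using fls_deriv_power[of a 1] by (simp add: numeral_2_eq_2)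

lemma fls_deriv_3pow[simp]: "fls_deriv ((3::int fls) ^ j) = 0"
proof -
  have "(3::int fls) ^ j = of_int (3^j)" by simp
  then show ?thesis by (metis fls_deriv_of_int)
qed

lemma fls_deriv_of_int_mult: "fls_deriv (of_int c * a :: int fls) = of_int c * fls_deriv a"
  by simp

context psictx
begin

lemma RR_D_ps: "fls_deriv ps \<in> RR"
proof -
  obtain r c where rc: "r \<in> R0" "fls_deriv ps = ps * (fls_deriv (xl 0) * il + 3 * r) + of_int NN * c"
    using D_ps by blast
  show ?thesis unfolding rc(2)
    by (intro RR_add RR_mult RR_ps RR_numeral RR_N R0_RR[OF rc(1)] R0_RR[OF R0_D_xl] RR_il)
qed

lemma RR_deriv: "a \<in> RR \<Longrightarrow> fls_deriv a \<in> RR"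
proof (induction rule: RR.induct)
  case RR_Xi then show ?case using R0_RR[OF R0_deriv[OF R0_Xi]] .
next
  case RR_il then show ?case using R0_RR[OF R0_deriv[OF R0_il]] .
next
  case (RR_N a)
  have "fls_deriv (of_int NN * a) = of_int NN * fls_deriv a" by simp
  then show ?case using RR.RR_N by metis
next
  case RR_ps then show ?case by (rule RR_D_ps)
qed (auto intro: RR.intros)

lemma D_v: "\<exists>t \<in> RR. \<exists>c. fls_deriv v = 3 * t + of_int NN * c"
proof -
  obtain r c where rc: "r \<in> R0" "fls_deriv ps = ps * (fls_deriv (xl 0) * il + 3 * r) + of_int NN * c"
    using D_ps by blast
  let ?x = "xl 0" and ?Dx = "fls_deriv (xl 0)"
  have "fls_deriv v = ?Dx * ps^2 + (1 + ?x) * (2 * ps * fls_deriv ps)"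
    unfolding v_def by (simp add: fls_deriv_sq algebra_simps)
  also have "\<dots> = ?Dx * ps^2 + 2 * ps^2 * ?Dx * ((1 + ?x) * il) + 6 * (1 + ?x) * ps^2 * r
       + of_int NN * (2 * (1 + ?x) * ps * c)"
    unfolding rc(2) by (simp add: algebra_simps power2_eq_square)
  also have "\<dots> = 3 * (?Dx * ps^2 + 2 * (1 + ?x) * ps^2 * r) + of_int NN * (2 * (1 + ?x) * ps * c)"
    unfolding il_inv by (simp add: algebra_simps)
  finally have e: "fls_deriv v = 3 * (?Dx * ps^2 + 2 * (1 + ?x) * ps^2 * r) + of_int NN * (2 * (1 + ?x) * ps * c)" .
  have "?Dx * ps^2 + 2 * (1 + ?x) * ps^2 * r \<in> RR"
    by (intro RR_add RR_mult RR_power RR_ps RR_numeral RR_1 RR_xl R0_RR[OF rc(1)] R0_RR[OF R0_D_xl])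
  with e show ?thesis by blast
qed

inductive_set JJ :: "nat \<Rightarrow> int fls set" for k :: nat where
  J_gen: "j \<le> k \<Longrightarrow> r \<in> RR \<Longrightarrow> 3^j * v^(k-j) * r \<in> JJ k"
| J_N: "of_int NN * a \<in> JJ k"
| J_add: "a \<in> JJ k \<Longrightarrow> b \<in> JJ k \<Longrightarrow> a + b \<in> JJ k"

lemma J_0[simp]: "0 \<in> JJ k"
  using J_gen[of 0 k 0] by simp

lemma J_RR: "a \<in> JJ k \<Longrightarrow> a \<in> RR"
  by (induction rule: JJ.induct) (auto intro!: RR_mult RR_power RR_v RR_of_int RR_add RR_N)

lemma J_multR: "a \<in> JJ k \<Longrightarrow> r \<in> RR \<Longrightarrow> r * a \<in> JJ k"
proof (induction rule: JJ.induct)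
  case (J_gen j r')
  have "r * (3^j * v^(k-j) * r') = 3^j * v^(k-j) * (r * r')" by (simp add: algebra_simps)
  then show ?case using JJ.J_gen[OF J_gen(1) RR_mult[OF J_gen(3) J_gen(2)]] by (simp only:)
next
  case (J_N a)
  have "r * (of_int NN * a) = of_int NN * (r * a)" by (simp add: algebra_simps)
  then show ?case using JJ.J_N by metis
next
  case (J_add a b)
  then show ?case by (simp add: distrib_left JJ.J_add)
qed

lemma J_multR': "a \<in> JJ k \<Longrightarrow> r \<in> RR \<Longrightarrow> a * r \<in> JJ k"
  using J_multR by (simp add: mult.commute)

lemma J_uminus: "a \<in> JJ k \<Longrightarrow> - a \<in> JJ k"
  using J_multR[of a k "fls_const (-1)"] RR_const[of "-1"] by (simp add: fls_const_uminus[symmetric])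

lemma J_diff: "a \<in> JJ k \<Longrightarrow> b \<in> JJ k \<Longrightarrow> a - b \<in> JJ k"
  using J_add J_uminus by (metis diff_conv_add_uminus)

lemma J_sum: "(\<And>i. i \<in> A \<Longrightarrow> f i \<in> JJ k) \<Longrightarrow> sum f A \<in> JJ k"
  by (induction A rule: infinite_finite_induct) (auto intro: J_add)

lemma J_Suc: "a \<in> JJ (Suc k) \<Longrightarrow> a \<in> JJ k"
proof (induction rule: JJ.induct)
  case (J_gen j r)
  show ?case
  proof (cases "j \<le> k")
    case True
    have "3^j * v^(Suc k - j) * r = 3^j * v^(k-j) * (v * r)"
      using True by (simp add: Suc_diff_le algebra_simps)
    then show ?thesis using JJ.J_gen[OF True RR_mult[OF RR_v J_gen(2)]] by (simp only:)
  next
    case False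
    then have j: "j = Suc k" using J_gen(1) by simp
    have "3^j * v^(Suc k - j) * r = 3^k * v^(k-k) * (3 * r)"
      using j by simp
    then show ?thesis using JJ.J_gen[OF order.refl RR_mult[OF RR_numeral J_gen(2)]] by (simp only:)
  qed
qed (auto intro: JJ.intros)

lemma J_le: "k' \<le> k \<Longrightarrow> a \<in> JJ k \<Longrightarrow> a \<in> JJ k'"
proof (induction k)
  case 0 then show ?case by simp
next
  case (Suc k)
  then show ?case using J_Suc by (cases "k' = Suc k") auto
qed

lemma J_of_RR: "r \<in> RR \<Longrightarrow> r \<in> JJ 0"
  using J_gen[of 0 0 r] by simp

lemma J_v: "v \<in> JJ 1"
  using J_gen[of 0 1 1] by simp

lemma J_3: "a \<in> JJ k \<Longrightarrow> 3 * a \<in> JJ (Suc k)"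
proof (induction rule: JJ.induct)
  case (J_gen j r)
  have "3 * (3^j * v^(k-j) * r) = 3^Suc j * v^(Suc k - Suc j) * r" by simp
  then show ?case using JJ.J_gen[of "Suc j" "Suc k" r] J_gen by (simp only: Suc_le_mono)
next
  case (J_N a)
  have "3 * (of_int NN * a) = of_int NN * (3 * a)" by (simp add: algebra_simps)
  then show ?case using JJ.J_N by metis
next
  case (J_add a b)
  then show ?case by (simp add: distrib_left JJ.J_add)
qed

lemma J_mult: "a \<in> JJ i \<Longrightarrow> b \<in> JJ j \<Longrightarrow> a * b \<in> JJ (i + j)"
proof (induction rule: JJ.induct)
  case (J_gen j1 r1)
  from J_gen(3) show ?case
  proof (induction rule: JJ.induct)
    case (J_gen j2 r2)
    have "3^j1 * v^(i-j1) * r1 * (3^j2 * v^(j-j2) * r2)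
        = 3^(j1+j2) * v^((i+j)-(j1+j2)) * (r1 * r2)"
    proof -
      have "(i-j1) + (j-j2) = (i+j)-(j1+j2)" using J_gen(1) \<open>j1 \<le> i\<close> by simp
      then have "v^(i-j1) * v^(j-j2) = v^((i+j)-(j1+j2))" by (simp flip: power_add)
      then show ?thesis by (simp add: power_add algebra_simps)
    qed
    moreover have "j1 + j2 \<le> i + j" using J_gen(1) \<open>j1 \<le> i\<close> by simp
    ultimately show ?case using JJ.J_gen[of "j1+j2" "i+j" "r1*r2"] RR_mult[OF \<open>r1 \<in> RR\<close> J_gen(2)] by (simp only:)
  next
    case (J_N a)
    have "3^j1 * v^(i-j1) * r1 * (of_int NN * a) = of_int NN * (3^j1 * v^(i-j1) * r1 * a)"
      by (simp add: algebra_simps)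
    then show ?case using JJ.J_N by metis
  next
    case (J_add a b)
    then show ?case by (simp add: distrib_left JJ.J_add)
  qed
next
  case (J_N a)
  have "of_int NN * a * b = of_int NN * (a * b)" by (simp add: algebra_simps)
  then show ?case using JJ.J_N by metis
next
  case (J_add a1 b1)
  then show ?case by (simp add: distrib_right JJ.J_add)
qed

lemma J_deriv: "a \<in> JJ k \<Longrightarrow> fls_deriv a \<in> JJ k"
proof (induction rule: JJ.induct)
  case (J_gen j r)
  show ?case
  proof (cases "k - j")
    case 0
    then have "fls_deriv (3^j * v^(k-j) * r) = 3^j * v^(k-j) * fls_deriv r" by simp
    then show ?thesis using JJ.J_gen[OF J_gen(1) RR_deriv[OF J_gen(2)]] by (simp only:)
  next
    case (Suc n)
    obtain t c where tc: "t \<in> RR" "fls_deriv v = 3 * t + of_int NN * c" using D_v by blast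
    have jk: "Suc j \<le> k" "k - Suc j = n" using Suc by auto
    have "fls_deriv (3^j * v^(k-j) * r)
        = 3^j * (v^(k-j) * fls_deriv r + of_nat (Suc n) * v^n * fls_deriv v * r)"
    proof -
      have dp: "fls_deriv (v^(k-j)) = of_nat (Suc n) * v^n * fls_deriv v" unfolding Suc by (rule fls_deriv_power)
      show ?thesis by (simp add: dp algebra_simps)
    qed
    also have "\<dots> = 3^j * v^(k-j) * fls_deriv r
        + 3^Suc j * v^(k - Suc j) * (of_nat (Suc n) * t * r)
        + of_int NN * (3^j * of_nat (Suc n) * v^n * c * r)"
      unfolding tc(2) jk(2) by (simp add: algebra_simps)
    finally have e: "fls_deriv (3^j * v^(k-j) * r) = 3^j * v^(k-j) * fls_deriv r
        + 3^Suc j * v^(k - Suc j) * (of_nat (Suc n) * t * r)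
        + of_int NN * (3^j * of_nat (Suc n) * v^n * c * r)" .
    have "of_nat (Suc n) * t * r \<in> RR"
      using RR_of_int[of "int (Suc n)"] tc(1) J_gen(2) by (auto intro!: RR_mult)
    then show ?thesis unfolding e
      by (intro JJ.J_add JJ.J_gen JJ.J_N J_gen(1) jk(1) RR_deriv[OF J_gen(2)])
  qed
next
  case (J_N a)
  have "fls_deriv (of_int NN * a) = of_int NN * fls_deriv a" by simp
  then show ?case using JJ.J_N by metis
next
  case (J_add a b)
  then show ?case by (simp add: JJ.J_add)
qed

lemma J_cd: "a \<in> JJ k \<Longrightarrow> k \<le> m \<Longrightarrow> cd (3^k) a"
proof (induction rule: JJ.induct)
  case (J_gen j r)
  obtain w where w: "v = 3 * w" using v3 by blast
  have "(3::int fls)^j * v^(k-j) * r = 3^j * 3^(k-j) * (w^(k-j) * r)"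
    unfolding w by (simp add: power_mult_distrib algebra_simps)
  also have "(3::int fls)^j * 3^(k-j) = of_int (3^k)" using J_gen(1) by (simp flip: power_add)
  finally show ?case by (simp only: cd_of_int_mult)
next
  case (J_N a)
  have "of_int NN * a = of_int (3^k) * (of_int (3^(m-k)) * a)"
    using J_N by (simp add: NN_def flip: power_add)
  then show ?case by (simp only: cd_of_int_mult)
next
  case (J_add a b)
  then show ?case by (simp add: cd_add)
qed

end


definition QL :: "intpolyQ \<Rightarrow> int fls \<Rightarrow> int fls" where
  "QL Q g = (\<Sum>(c, e, ds) \<leftarrow> Q.
      fls_const c * fls_X ^ e * (\<Prod>j<length ds. ((fls_deriv ^^ j) g) ^ (ds ! j)))"

definition EL :: "int poly \<Rightarrow> int poly \<Rightarrow> int poly \<Rightarrow> intpolyQ \<Rightarrow> int fls \<Rightarrow> int fls" where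
  "EL c2 c1 c0 Q g = polyf c2 * g^2 + polyf c1 * g + polyf c0 + 3 * QL Q g"

lemma fps_to_fls_deriv_iter: "fps_to_fls ((fps_deriv ^^ j) G) = (fls_deriv ^^ j) (fps_to_fls (G :: int fps))"
  by (induction j) (simp_all flip: fls_deriv_fps_to_fls)

lemma QL_fps: "fps_to_fls (Qeval Q G) = QL Q (fps_to_fls G)"
proof (induction Q)
  case Nil then show ?case by (simp add: Qeval_def QL_def)
next
  case (Cons q Q)
  obtain c e ds where q: "q = (c, e, ds)" by (cases q) auto
  have "fps_to_fls (Qeval (q # Q) G) = fps_to_fls (fps_const c * fps_X ^ e * (\<Prod>j<length ds. ((fps_deriv ^^ j) G) ^ (ds ! j))) + fps_to_fls (Qeval Q G)"
    by (simp add: Qeval_def q)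
  also have "\<dots> = QL (q # Q) (fps_to_fls G)"
    using Cons by (simp add: QL_def q fls_times_fps_to_fls fps_to_fls_power fps_to_fls_prod fps_to_fls_deriv_iter)
  finally show ?case .
qed

lemma EL_fps: "fps_to_fls (eqn_lhs c2 c1 c0 Q G) = EL c2 c1 c0 Q (fps_to_fls G)"
  by (simp add: eqn_lhs_def EL_def QL_fps polyf_def fls_times_fps_to_fls fps_to_fls_power)

locale idealctx =
  fixes S I :: "int fls set"
  assumes S_const: "fls_const c \<in> S" and S_X: "fls_X \<in> S"
    and S_add: "a \<in> S \<Longrightarrow> b \<in> S \<Longrightarrow> a + b \<in> S"
    and S_mult: "a \<in> S \<Longrightarrow> b \<in> S \<Longrightarrow> a * b \<in> S"
    and S_deriv: "a \<in> S \<Longrightarrow> fls_deriv a \<in> S"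
    and I_0: "0 \<in> I"
    and I_add: "a \<in> I \<Longrightarrow> b \<in> I \<Longrightarrow> a + b \<in> I"
    and I_mult: "a \<in> I \<Longrightarrow> r \<in> S \<Longrightarrow> r * a \<in> I"
    and I_deriv: "a \<in> I \<Longrightarrow> fls_deriv a \<in> I"
begin

lemma S_1: "1 \<in> S" using S_const[of 1] by simp

lemma S_power: "a \<in> S \<Longrightarrow> a ^ n \<in> S"
  by (induction n) (auto intro: S_mult S_1)

lemma S_prod: "(\<And>i. i \<in> A \<Longrightarrow> f i \<in> S) \<Longrightarrow> prod f A \<in> S"
  by (induction A rule: infinite_finite_induct) (auto intro: S_mult S_1)

lemma S_diter: "a \<in> S \<Longrightarrow> (fls_deriv ^^ j) a \<in> S"
  by (induction j) (auto intro: S_deriv)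

lemma I_diter: "a \<in> I \<Longrightarrow> (fls_deriv ^^ j) a \<in> I"
  by (induction j) (auto intro: I_deriv)

lemma diter_diff: "(fls_deriv ^^ j) a - (fls_deriv ^^ j) b = (fls_deriv ^^ j) (a - b :: int fls)"
  by (induction j) (simp_all flip: fls_deriv_sub)

lemma I_power: "a \<in> S \<Longrightarrow> b \<in> S \<Longrightarrow> a - b \<in> I \<Longrightarrow> a ^ n - b ^ n \<in> I"
proof (induction n)
  case 0 then show ?case by (simp add: I_0)
next
  case (Suc n)
  have "a ^ Suc n - b ^ Suc n = a * (a^n - b^n) + b^n * (a - b)" by (simp add: algebra_simps)
  then show ?case using Suc by (auto intro!: I_add I_mult S_power)
qed

lemma I_prod: "(\<And>i. i < (n::nat) \<Longrightarrow> f i \<in> S) \<Longrightarrow> (\<And>i. i < n \<Longrightarrow> g i \<in> S) \<Longrightarrow> (\<And>i. i < n \<Longrightarrow> f i - g i \<in> I)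
   \<Longrightarrow> (\<Prod>i<n. f i) - (\<Prod>i<n. g i) \<in> I"
proof (induction n)
  case 0 then show ?case by (simp add: I_0)
next
  case (Suc n)
  have "(\<Prod>i<Suc n. f i) - (\<Prod>i<Suc n. g i) = f n * ((\<Prod>i<n. f i) - (\<Prod>i<n. g i)) + (\<Prod>i<n. g i) * (f n - g n)"
    by (simp add: algebra_simps)
  then show ?case using Suc by (auto intro!: I_add I_mult S_prod)
qed

lemma QL_S: "g \<in> S \<Longrightarrow> QL Q g \<in> S"
proof (induction Q)
  case Nil then show ?case using S_const[of 0] by (simp add: QL_def)
next
  case (Cons q Q)
  obtain c e ds where q: "q = (c, e, ds)" by (cases q) auto
  show ?case using Cons
    by (simp add: QL_def q) (intro S_add S_mult S_const S_power S_X S_prod S_diter, auto simp: QL_def)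
qed

lemma QL_I: "g \<in> S \<Longrightarrow> h \<in> S \<Longrightarrow> g - h \<in> I \<Longrightarrow> QL Q g - QL Q h \<in> I"
proof (induction Q)
  case Nil then show ?case by (simp add: QL_def I_0)
next
  case (Cons q Q)
  obtain c e ds where q: "q = (c, e, ds)" by (cases q) auto
  let ?P = "\<lambda>g. (\<Prod>j<length ds. ((fls_deriv ^^ j) g) ^ (ds ! j))"
  have P: "?P g - ?P h \<in> I"
  proof (rule I_prod)
    fix i assume "i < length ds"
    show "(fls_deriv ^^ i) g ^ (ds ! i) - (fls_deriv ^^ i) h ^ (ds ! i) \<in> I"
      by (rule I_power) (use Cons.prems in \<open>auto intro: S_diter simp: diter_diff I_diter\<close>)
  qed (use Cons.prems in \<open>auto intro: S_diter S_power\<close>)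
  have "QL (q # Q) g - QL (q # Q) h = (fls_const c * fls_X ^ e) * (?P g - ?P h) + (QL Q g - QL Q h)"
    by (simp add: QL_def q algebra_simps)
  then show ?case using P Cons by (auto intro!: I_add I_mult S_mult S_const S_power S_X)
qed

end

context psictx
begin

lemma ideal_J: "idealctx RR (JJ k)"
  by unfold_locales (auto intro: RR.intros RR_deriv J_add J_multR J_deriv)

lemma RR_QL: "g \<in> RR \<Longrightarrow> QL Q g \<in> RR"
  using idealctx.QL_S[OF ideal_J] .

lemma RR_EL: "g \<in> RR \<Longrightarrow> EL c2 c1 c0 Q g \<in> RR"
  unfolding EL_def by (intro RR_add RR_mult RR_power RR_polyf RR_numeral RR_QL)

lemma hensel_step:
  assumes "1 \<le> k" "G \<in> RR" "G0 \<in> RR" "W \<in> RR"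
    and "EL c2 c1 c0 Q G \<in> JJ k" "G - G0 \<in> JJ 1"
    and "W * (2 * polyf c2 * G0 + polyf c1) - 1 \<in> JJ 1"
  shows "\<exists>G' \<in> RR. EL c2 c1 c0 Q G' \<in> JJ (Suc k) \<and> G' - G0 \<in> JJ 1"
proof -
  let ?E = "EL c2 c1 c0 Q G"
  let ?A = "2 * polyf c2 * G + polyf c1"
  define d where "d = - (W * ?E)"
  have dJ: "d \<in> JJ k" unfolding d_def by (intro J_uminus J_multR assms)
  have dR: "d \<in> RR" using J_RR[OF dJ] .
  have AW: "?A * W - 1 \<in> JJ 1"
  proof -
    have h: "?A * W - 1 = (W * (2 * polyf c2 * G0 + polyf c1) - 1) + (2 * polyf c2 * W) * (G - G0)"
      by (simp add: algebra_simps)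
    show ?thesis unfolding h using assms by (intro J_add J_multR RR_mult RR_polyf RR_numeral) auto
  qed
  have e: "EL c2 c1 c0 Q (G + d) = - ((?A * W - 1) * ?E) + (polyf c2 * d) * d + 3 * (QL Q (G + d) - QL Q G)"
    unfolding EL_def d_def by (simp add: algebra_simps power2_eq_square)
  have t1: "- ((?A * W - 1) * ?E) \<in> JJ (Suc k)"
    using J_uminus[OF J_mult[OF AW assms(5)]] by simp
  have t2: "(polyf c2 * d) * d \<in> JJ (Suc k)"
  proof -
    have "(polyf c2 * d) * d \<in> JJ (k + k)" by (intro J_mult J_multR dJ RR_polyf)
    then show ?thesis using J_le[of "Suc k" "k + k"] assms(1) by simp
  qed
  have t3: "3 * (QL Q (G + d) - QL Q G) \<in> JJ (Suc k)"
    by (intro J_3 idealctx.QL_I[OF ideal_J] RR_add assms(2) dR) (simp add: dJ)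
  have "EL c2 c1 c0 Q (G + d) \<in> JJ (Suc k)" unfolding e by (intro J_add t1 t2 t3)
  moreover have "(G + d) - G0 \<in> JJ 1"
  proof -
    have h: "(G + d) - G0 = (G - G0) + d" by simp
    have "d \<in> JJ 1" using J_le[of 1 k] assms(1) dJ by simp
    then show ?thesis unfolding h using assms(6) by (intro J_add)
  qed
  moreover have "G + d \<in> RR" using assms(2) dR by (rule RR_add)
  ultimately show ?thesis by blast
qed

lemma hensel:
  assumes "G0 \<in> RR" "W \<in> RR" "EL c2 c1 c0 Q G0 \<in> JJ 1"
    and "W * (2 * polyf c2 * G0 + polyf c1) - 1 \<in> JJ 1"
  shows "\<exists>G \<in> RR. EL c2 c1 c0 Q G \<in> JJ (Suc k) \<and> G - G0 \<in> JJ 1"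
proof (induction k)
  case 0
  show ?case using assms by (intro bexI[of _ G0]) auto
next
  case (Suc k)
  then obtain G where "G \<in> RR" "EL c2 c1 c0 Q G \<in> JJ (Suc k)" "G - G0 \<in> JJ 1" by blast
  then show ?case using hensel_step[of "Suc k" G G0 W] assms by simp
qed

end


lemma cd3: "cd 3 (3 * c)"
  using cd_of_int_mult[of 3 c] by simp

lemma cd_times3: "cd p a \<Longrightarrow> cd (3 * p) (3 * a)"
  unfolding cd_def by (simp add: mult_dvd_mono)

lemma cd_scale: "cd p f \<Longrightarrow> cd (q * p) (of_int q * f)"
  unfolding cd_def by (simp add: mult_dvd_mono)

lemma ideal_cd: "idealctx UNIV {f. cd p f}"
  by unfold_locales (auto intro: cd_add cd_mult_left cd_deriv)

lemma poly_cong_ex: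
  assumes "poly_cong 3 a b"
  shows "\<exists>p. polyf a = polyf b + 3 * polyf p"
proof -
  define p where "p = map_poly (\<lambda>c. c div 3) (a - b)"
  have "a - b = smult 3 p"
  proof (rule poly_eqI)
    fix n
    have "3 dvd coeff (a - b) n" using assms unfolding poly_cong_def
      by (simp add: cong_iff_dvd_diff)
    then show "coeff (a - b) n = coeff (smult 3 p) n"
      unfolding p_def by (simp add: coeff_map_poly)
  qed
  then have "a = b + smult 3 p" by (simp add: algebra_simps)
  then have "polyf a = polyf b + 3 * polyf p" by (simp add: polyf_add polyf_smult)
  then show ?thesis by blast
qed

locale mainctx = psictx +
  fixes c0 c1 c2 :: "int poly" and Q :: intpolyQ and F :: "int fps"
    and e1 e2 f1 f2 :: nat and p2 q3 :: "int poly"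
  assumes hc2: "polyf c2 = fls_X^e1 * (1 + xl 0)^e2 + 3 * polyf p2"
    and hD: "polyf c1^2 - polyf c0 * polyf c2 = fls_X^(2*f1) * (1 + xl 0)^(2*f2+1) + 3 * polyf q3"
    and hF: "EL c2 c1 c0 Q (fps_to_fls F) = 0"
begin

definition yy :: "int fls" where "yy = 1 + xl 0"

lemma yy_il: "yy * il = 1" using il_inv by (simp add: yy_def)

abbreviation "C0 \<equiv> polyf c0"
abbreviation "C1 \<equiv> polyf c1"
abbreviation "C2 \<equiv> polyf c2"
abbreviation "P2 \<equiv> polyf p2"
abbreviation "Q3 \<equiv> polyf q3"
abbreviation "Fp \<equiv> fps_to_fls F"

definition u :: "int fls" where "u = fls_X_inv^e1 * il^e2"
definition C2' :: "int fls" where "C2' = fls_X^e1 * yy^e2"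
definition D0 :: "int fls" where "D0 = fls_X^(2*f1) * yy^(2*f2+1)"
definition S0 :: "int fls" where "S0 = fls_X^f1 * yy^(f2+1) * ps"
definition T :: "int fls" where "T = 2 * C2 * Fp + C1"

lemma uC2: "u * C2' = 1"
proof -
  have "u * C2' = (fls_X * fls_X_inv)^e1 * (yy * il)^e2"
    by (simp add: u_def C2'_def power_mult_distrib algebra_simps)
  then show ?thesis by (simp add: X_Xi yy_il)
qed

lemma one_v: "yy * ps^2 = 1 + v" by (simp add: v_def yy_def)

lemma S0sq: "S0^2 = D0 + D0 * v"
proof -
  have a: "(fls_X^f1)^2 = (fls_X::int fls)^(2*f1)" by (simp add: power_mult mult.commute)
  have b: "(yy^(f2+1))^2 = yy^(2*f2+1) * yy"
  proof -
    have "(yy^(f2+1))^2 = yy^((f2+1)*2)" by (simp only: power_mult)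
    also have "(f2+1)*2 = Suc (2*f2+1)" by simp
    finally show ?thesis by (simp only: power_Suc2)
  qed
  have "S0^2 = (fls_X^f1)^2 * (yy^(f2+1))^2 * ps^2" by (simp add: S0_def power_mult_distrib)
  also have "\<dots> = fls_X^(2*f1) * yy^(2*f2+1) * (yy * ps^2)" unfolding a b by (simp add: mult.assoc)
  finally have "S0^2 = fls_X^(2*f1) * yy^(2*f2+1) * (yy * ps^2)" .
  then show ?thesis by (simp add: one_v D0_def algebra_simps)
qed

lemma E0_cd: "cd 3 (C2 * Fp^2 + C1 * Fp + C0)"
proof -
  have "C2 * Fp^2 + C1 * Fp + C0 = 3 * (- QL Q Fp)"
    using hF unfolding EL_def by (simp add: algebra_simps eq_neg_iff_add_eq_0)
  then show ?thesis by (simp add: cd3 cd_uminus)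
qed

lemma TS_cd: "cd 3 ((T - S0) * (T + S0))"
proof -
  have hD': "C1^2 = C0 * C2 + D0 + 3 * Q3" using hD unfolding D0_def yy_def by (simp add: algebra_simps)
  have "(T - S0) * (T + S0) = 4 * C2 * (C2 * Fp^2 + C1 * Fp + C0) + (C1^2 - 4 * C0 * C2) - S0^2"
    by (simp add: T_def algebra_simps power2_eq_square)
  also have "\<dots> = 4 * C2 * (C2 * Fp^2 + C1 * Fp + C0) + 3 * (Q3 - C0 * C2) - D0 * v"
    unfolding S0sq hD' by (simp add: algebra_simps)
  finally have e: "(T - S0) * (T + S0) = 4 * C2 * (C2 * Fp^2 + C1 * Fp + C0) + 3 * (Q3 - C0 * C2) - D0 * v" .
  show ?thesis unfolding e
    by (intro cd_diff cd_add cd_mult_left cd3 E0_cd v_cd)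
qed

lemma sigma_ex: "\<exists>\<sigma>::int. (\<sigma> = 1 \<or> \<sigma> = -1) \<and> cd 3 (T - of_int \<sigma> * S0)"
proof -
  from cd_domain[OF TS_cd] show ?thesis
  proof
    assume "cd 3 (T - S0)"
    then show ?thesis by (intro exI[of _ 1]) simp
  next
    assume "cd 3 (T + S0)"
    then show ?thesis by (intro exI[of _ "-1"]) simp
  qed
qed

lemma D0_not_cd: "\<not> cd 3 D0"
proof
  assume "cd 3 D0"
  have "D0 = fps_to_fls (fps_X^(2*f1) * (1 + xps eps gam)^(2*f2+1))"
    by (simp add: D0_def yy_def xl_xps fls_times_fps_to_fls fps_to_fls_power)
  then have "\<forall>n. 3 dvd (fps_X^(2*f1) * (1 + xps eps gam)^(2*f2+1)) $ n"
    using \<open>cd 3 D0\<close> by (simp add: cd_fps)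
  then have "3 dvd (fps_X^(2*f1) * (1 + xps eps gam)^(2*f2+1)) $ (2*f1)" by blast
  moreover have "(fps_X^(2*f1) * (1 + xps eps gam)^(2*f2+1)) $ (2*f1) = 1"
    using gam_pos by (simp add: fps_X_power_mult_nth fps_power_zeroth xps_def power_0_left)
  ultimately show False by simp
qed

lemma T_not_cd: "\<not> cd 3 T"
proof
  assume "cd 3 T"
  then have "cd 3 (T * T)" by (rule cd_mult_right)
  moreover have "cd 3 ((T - S0) * (T + S0))" by (rule TS_cd)
  ultimately have "cd 3 (T * T - (T - S0) * (T + S0))" by (rule cd_diff)
  moreover have "T * T - (T - S0) * (T + S0) = D0 + D0 * v"
    using S0sq by (simp add: algebra_simps power2_eq_square)
  ultimately have "cd 3 (D0 + D0 * v - D0 * v)" using cd_diff cd_mult_left v_cd by metis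
  then show False using D0_not_cd by simp
qed

end


context mainctx
begin

lemma C2_eq: "C2 = C2' + 3 * P2" using hc2 by (simp add: C2'_def yy_def)
lemma C1sq: "C1^2 = C0 * C2' + 3 * (C0 * P2 + Q3) + D0"
  using hD unfolding D0_def yy_def C2_eq by (simp add: algebra_simps)

context
  fixes s :: "int fls"
  assumes s2: "s^2 = 1" and sT: "cd 3 (T - s * S0)" and sR: "s \<in> RR"
begin

definition G0 :: "int fls" where "G0 = u * (C1 - s * S0)"
definition W :: "int fls" where "W = s * fls_X_inv^f1 * il^f2 * ps"

lemma F_G0: "cd 3 (Fp - G0)"
proof -
  have "u * (3 * C2 * Fp - 3 * P2 * Fp - (T - s * S0)) = (u * C2') * Fp - u * (C1 - s * S0)"
    by (simp add: T_def C2_eq algebra_simps)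
  then have e: "Fp - G0 = u * (3 * C2 * Fp - 3 * P2 * Fp - (T - s * S0))"
    by (simp add: uC2 G0_def)
  have a: "cd 3 (3 * C2 * Fp)" using cd3[of "C2 * Fp"] by (simp add: mult.assoc)
  have b: "cd 3 (3 * P2 * Fp)" using cd3[of "P2 * Fp"] by (simp add: mult.assoc)
  show ?thesis unfolding e by (rule cd_mult_left, rule cd_diff[OF cd_diff[OF a b] sT])
qed

lemma EL_G0: "EL c2 c1 c0 Q G0 \<in> JJ 1"
proof -
  let ?R = "P2 * G0^2 + QL Q G0 + C0 + u * (2 * C0 * P2 + D0 + 2 * Q3) - u * s * C1 * S0"
  have s1: "C2 * G0^2 = (u * C2') * (u * (C1 - s * S0)^2) + 3 * P2 * G0^2"
    by (simp add: G0_def C2_eq algebra_simps power2_eq_square)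
  have "EL c2 c1 c0 Q G0 = C2 * G0^2 + C1 * G0 + C0 + 3 * QL Q G0" by (simp add: EL_def)
  also have "\<dots> = u * (C1 - s * S0)^2 + C1 * G0 + 3 * P2 * G0^2 + C0 + 3 * QL Q G0"
    unfolding s1 uC2 by simp
  also have "\<dots> = u * (2 * C1^2 + s^2 * S0^2) - 3 * u * s * C1 * S0 + 3 * P2 * G0^2 + C0 + 3 * QL Q G0"
    by (simp add: G0_def algebra_simps power2_eq_square)
  also have "\<dots> = (u * C2') * (2 * C0) + u * (3 * (2 * C0 * P2 + D0 + 2 * Q3) + D0 * v)
       - 3 * u * s * C1 * S0 + 3 * P2 * G0^2 + C0 + 3 * QL Q G0"
    unfolding s2 S0sq C1sq by (simp add: algebra_simps)
  also have "\<dots> = 3 * ?R + v * (u * D0)"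
    unfolding uC2 by (simp add: algebra_simps)
  finally have e: "EL c2 c1 c0 Q G0 = 3 * ?R + v * (u * D0)" .
  have uR: "u \<in> RR" unfolding u_def by (intro RR_mult RR_power RR_Xi RR_il)
  have S0R: "S0 \<in> RR" unfolding S0_def yy_def by (intro RR_mult RR_power RR_add RR_1 RR_xl RR_X RR_ps)
  have D0R: "D0 \<in> RR" unfolding D0_def yy_def by (intro RR_mult RR_power RR_add RR_1 RR_xl RR_X)
  have G0R: "G0 \<in> RR" unfolding G0_def by (intro RR_mult RR_diff uR RR_polyf sR S0R)
  have "?R \<in> RR"
    by (intro RR_add RR_diff RR_mult RR_power RR_polyf RR_QL G0R uR D0R S0R sR RR_numeral)
  then have "3 * ?R \<in> JJ (Suc 0)" by (rule J_3[OF J_of_RR])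
  then have "3 * ?R \<in> JJ 1" by (simp only: One_nat_def)
  moreover have "v * (u * D0) \<in> JJ 1" by (intro J_multR' J_v RR_mult uR D0R)
  ultimately show ?thesis unfolding e by (rule J_add)
qed

lemma G0_RR: "G0 \<in> RR"
proof -
  have uR: "u \<in> RR" unfolding u_def by (intro RR_mult RR_power RR_Xi RR_il)
  have S0R: "S0 \<in> RR" unfolding S0_def yy_def by (intro RR_mult RR_power RR_add RR_1 RR_xl RR_X RR_ps)
  show ?thesis unfolding G0_def by (intro RR_mult RR_diff uR RR_polyf sR S0R)
qed

lemma W_RR: "W \<in> RR"
  unfolding W_def by (intro RR_mult RR_power RR_Xi RR_il RR_ps sR)

lemma W_cond: "W * (2 * C2 * G0 + C1) - 1 \<in> JJ 1"
proof -
  have WS: "W * S0 = s * ((fls_X_inv * fls_X)^f1 * (il * yy)^f2 * (yy * ps^2))"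
    by (simp add: W_def S0_def power_mult_distrib algebra_simps power2_eq_square)
  have WS': "W * S0 = s * (1 + v)" unfolding WS one_v using X_Xi yy_il by (simp add: mult.commute)
  have "2 * C2 * G0 + C1 = 2 * (u * C2') * (C1 - s * S0) + 6 * P2 * G0 + C1"
    by (simp add: C2_eq G0_def algebra_simps)
  also have "\<dots> = 3 * (C1 + 2 * P2 * G0 - s * S0) + s * S0"
    unfolding uC2 by (simp add: algebra_simps)
  finally have a: "2 * C2 * G0 + C1 = 3 * (C1 + 2 * P2 * G0 - s * S0) + s * S0" .
  have "W * (2 * C2 * G0 + C1) - 1 = 3 * (W * (C1 + 2 * P2 * G0 - s * S0)) + (s^2 * (1 + v) - 1)"
    unfolding a using WS' by (simp add: algebra_simps power2_eq_square)
  also have "\<dots> = 3 * (W * (C1 + 2 * P2 * G0 - s * S0)) + v" unfolding s2 by simp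
  finally have e: "W * (2 * C2 * G0 + C1) - 1 = 3 * (W * (C1 + 2 * P2 * G0 - s * S0)) + v" .
  have S0R: "S0 \<in> RR" unfolding S0_def yy_def by (intro RR_mult RR_power RR_add RR_1 RR_xl RR_X RR_ps)
  have "W * (C1 + 2 * P2 * G0 - s * S0) \<in> RR"
    by (intro RR_mult RR_add RR_diff W_RR RR_polyf RR_numeral G0_RR sR S0R)
  then have "3 * (W * (C1 + 2 * P2 * G0 - s * S0)) \<in> JJ (Suc 0)" by (rule J_3[OF J_of_RR])
  then have "3 * (W * (C1 + 2 * P2 * G0 - s * S0)) \<in> JJ 1" by (simp only: One_nat_def)
  then show ?thesis unfolding e using J_v by (rule J_add)
qed

end

lemma lift:
  assumes "cd NN (EL c2 c1 c0 Q G)" "cd 3 (G - Fp)"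
  shows "cd NN (G - Fp)"
proof -
  have "1 \<le> k \<Longrightarrow> k \<le> m \<Longrightarrow> cd (3^k) (G - Fp)" for k
  proof (induction k)
    case 0 then show ?case by simp
  next
    case (Suc k)
    show ?case
    proof (cases "k = 0")
      case True then show ?thesis using assms(2) by simp
    next
      case False
      then have k1: "1 \<le> k" by simp
      have IH: "cd (3^k) (G - Fp)" using Suc k1 by simp
      obtain Dd where Dd: "G - Fp = of_int (3^k) * Dd" using cd_ex[OF _ IH] by auto
      have eq: "EL c2 c1 c0 Q G - EL c2 c1 c0 Q Fp = (G - Fp) * (T + C2 * (G - Fp)) + 3 * (QL Q G - QL Q Fp)"
        by (simp add: EL_def T_def algebra_simps power2_eq_square)
      have c1: "cd (3^Suc k) (EL c2 c1 c0 Q G)"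
      proof (rule cd_mono[OF _ assms(1)])
        show "3^Suc k dvd NN" unfolding NN_def by (rule le_imp_power_dvd[OF Suc(3)])
      qed
      have "cd (3^k) (QL Q G - QL Q Fp)"
        using idealctx.QL_I[OF ideal_cd, of G Fp "3^k" Q] IH by simp
      then have "cd (3 * 3^k) (3 * (QL Q G - QL Q Fp))" by (rule cd_times3)
      then have c2: "cd (3^Suc k) (3 * (QL Q G - QL Q Fp))" by (simp only: power_Suc)
      have "cd (3^Suc k) ((G - Fp) * (T + C2 * (G - Fp)))"
      proof -
        have "(G - Fp) * (T + C2 * (G - Fp)) = EL c2 c1 c0 Q G - 3 * (QL Q G - QL Q Fp)"
          using eq hF by simp
        then show ?thesis using cd_diff[OF c1 c2] by simp
      qed
      moreover have "(G - Fp) * (T + C2 * (G - Fp)) = of_int (3^k) * (Dd * (T + C2 * (of_int (3^k) * Dd)))"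
        unfolding Dd by (simp only: mult.assoc)
      moreover have "(3::int)^Suc k = 3^k * 3" by (simp only: power_Suc2)
      ultimately have cc: "cd (3^k * 3) (of_int (3^k) * (Dd * (T + C2 * (of_int (3^k) * Dd))))"
        by (simp only:)
      have c3: "cd 3 (Dd * (T + C2 * (of_int (3^k) * Dd)))" by (rule cd_cancel[OF _ cc]) simp
      have "cd 3 (of_int (3^k) * (C2 * Dd * Dd))"
      proof (rule cd_mono[OF _ cd_of_int_mult[of "3^k" "C2 * Dd * Dd"]])
        show "(3::int) dvd 3^k" using k1 by (simp add: dvd_power)
      qed
      moreover have "Dd * (T + C2 * (of_int (3^k) * Dd)) = Dd * T + of_int (3^k) * (C2 * Dd * Dd)"
        by (simp add: algebra_simps)
      ultimately have "cd 3 (Dd * T)" using c3 cd_diff by fastforce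
      then have "cd 3 Dd" using cd_domain T_not_cd by (metis mult.commute)
      then have "cd (3^k * 3) (of_int (3^k) * Dd)" by (rule cd_scale)
      then show ?thesis unfolding Dd by (simp add: mult.commute)
    qed
  qed
  then have "cd (3^m) (G - Fp)" using m_pos by simp
  then show ?thesis by (simp add: NN_def)
qed

end


context psictx
begin

definition y0 :: "int fls" where "y0 = 1 + xl 0"
lemma y0_il: "y0 * il = 1" using il_inv by (simp add: y0_def)
lemma polyf_lin: "polyf (lin eps gam) = y0"
  by (simp add: lin_def polyf_add polyf_monom y0_def xl0)

definition LL :: "int fls set" where
  "LL = {a. \<exists>k p l. a = fls_X_inv^k * polyf p * il^l}"

lemma LL_mult: "a \<in> LL \<Longrightarrow> b \<in> LL \<Longrightarrow> a * b \<in> LL"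
proof -
  assume "a \<in> LL" "b \<in> LL"
  then obtain k p l k' p' l' where ab: "a = fls_X_inv^k * polyf p * il^l" "b = fls_X_inv^k' * polyf p' * il^l'"
    unfolding LL_def by blast
  have "a * b = fls_X_inv^(k+k') * polyf (p * p') * il^(l+l')"
    unfolding ab by (simp add: polyf_mult power_add algebra_simps)
  then show ?thesis unfolding LL_def by blast
qed

lemma LL_add: "a \<in> LL \<Longrightarrow> b \<in> LL \<Longrightarrow> a + b \<in> LL"
proof -
  assume "a \<in> LL" "b \<in> LL"
  then obtain k p l k' p' l' where ab: "a = fls_X_inv^k * polyf p * il^l" "b = fls_X_inv^k' * polyf p' * il^l'"
    unfolding LL_def by blast
  define q where "q = monom 1 k' * p * lin eps gam ^ l' + monom 1 k * p' * lin eps gam ^ l"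
  have pq: "polyf q = fls_X^k' * polyf p * y0^l' + fls_X^k * polyf p' * y0^l"
    by (simp add: q_def polyf_add polyf_mult polyf_monom polyf_power polyf_lin)
  have "fls_X_inv^(k+k') * polyf q * il^(l+l')
      = fls_X_inv^k * polyf p * il^l * ((fls_X_inv * fls_X)^k' * (y0 * il)^l')
      + fls_X_inv^k' * polyf p' * il^l' * ((fls_X_inv * fls_X)^k * (y0 * il)^l)"
    unfolding pq by (simp add: power_add power_mult_distrib algebra_simps)
  also have "\<dots> = a + b" unfolding ab using X_Xi y0_il by (simp add: mult.commute)
  finally have "a + b = fls_X_inv^(k+k') * polyf q * il^(l+l')" by simp
  then show ?thesis unfolding LL_def by blast
qed

lemma LL_polyf: "polyf p \<in> LL"
  unfolding LL_def by (rule CollectI, rule exI[of _ 0], rule exI[of _ p], rule exI[of _ 0]) simp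

lemma LL_0: "0 \<in> LL" using LL_polyf[of 0] by simp
lemma LL_1: "1 \<in> LL" using LL_polyf[of 1] by simp
lemma LL_const: "fls_const c \<in> LL" using LL_polyf[of "[:c:]"] by (simp add: polyf_def fps_of_poly_const)
lemma LL_X: "fls_X \<in> LL" using LL_polyf[of "monom 1 1"] by (simp add: polyf_monom)
lemma LL_Xi: "fls_X_inv \<in> LL"
  unfolding LL_def by (rule CollectI, rule exI[of _ 1], rule exI[of _ 1], rule exI[of _ 0]) simp
lemma LL_il: "il \<in> LL"
  unfolding LL_def by (rule CollectI, rule exI[of _ 0], rule exI[of _ 1], rule exI[of _ 1]) simp
lemma LL_y0: "y0 \<in> LL" using LL_polyf[of "lin eps gam"] by (simp add: polyf_lin)
lemma LL_power: "a \<in> LL \<Longrightarrow> a ^ n \<in> LL"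
  by (induction n) (auto intro: LL_mult LL_1)
lemma LL_of_nat: "of_nat n \<in> LL"
proof -
  have "(of_nat n :: int fls) = fls_const (int n)" using fls_of_int[of "int n"] by simp
  then show ?thesis using LL_const[of "int n"] by simp
qed
lemma LL_uminus: "a \<in> LL \<Longrightarrow> - a \<in> LL"
  using LL_mult[OF LL_const[of "-1"]] by (simp add: fls_const_uminus[symmetric])

definition NF1 :: "int fls set" where
  "NF1 = {r. \<exists>n a c. (\<forall>i. a i \<in> LL) \<and> r = (\<Sum>i<n. a i * ps^i) + of_int NN * c}"

lemma sum_pad:
  assumes "n \<le> N"
  shows "(\<Sum>i<N. (if i < n then a i else 0) * (ps::int fls)^i) = (\<Sum>i<n. a i * ps^i)"
  using assms
proof (induction rule: dec_induct)
  case base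
  then show ?case by (intro sum.cong) auto
next
  case (step N)
  then show ?case by simp
qed

lemma NF1_add: "r \<in> NF1 \<Longrightarrow> s \<in> NF1 \<Longrightarrow> r + s \<in> NF1"
proof -
  assume "r \<in> NF1" "s \<in> NF1"
  then obtain n a c n' b c' where r: "\<forall>i. a i \<in> LL" "r = (\<Sum>i<n. a i * ps^i) + of_int NN * c"
    and s: "\<forall>i. b i \<in> LL" "s = (\<Sum>i<n'. b i * ps^i) + of_int NN * c'"
    unfolding NF1_def by blast
  define a' where "a' i = (if i < n then a i else 0) + (if i < n' then b i else 0)" for i
  have "(\<Sum>i<n+n'. a' i * ps^i) = (\<Sum>i<n. a i * ps^i) + (\<Sum>i<n'. b i * ps^i)"
    unfolding a'_def distrib_right sum.distrib by (simp add: sum_pad)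
  then have "r + s = (\<Sum>i<n+n'. a' i * ps^i) + of_int NN * (c + c')"
    using r s by (simp add: algebra_simps)
  moreover have "\<forall>i. a' i \<in> LL" using r s by (auto simp: a'_def intro!: LL_add LL_0)
  ultimately show ?thesis unfolding NF1_def by blast
qed

lemma NF1_LLmult: "l \<in> LL \<Longrightarrow> r \<in> NF1 \<Longrightarrow> l * r \<in> NF1"
proof -
  assume l: "l \<in> LL" "r \<in> NF1"
  then obtain n a c where r: "\<forall>i. a i \<in> LL" "r = (\<Sum>i<n. a i * ps^i) + of_int NN * c"
    unfolding NF1_def by blast
  have "l * r = (\<Sum>i<n. (l * a i) * ps^i) + of_int NN * (l * c)"
    unfolding r(2) by (simp add: distrib_left sum_distrib_left algebra_simps)
  moreover have "\<forall>i. l * a i \<in> LL" using r l by (auto intro: LL_mult)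
  ultimately show ?thesis unfolding NF1_def
    by (intro CollectI exI[of _ n] exI[of _ "\<lambda>i. l * a i"] exI[of _ "l * c"]) simp
qed

lemma NF1_psmult: "r \<in> NF1 \<Longrightarrow> ps * r \<in> NF1"
proof -
  assume "r \<in> NF1"
  then obtain n a c where r: "\<forall>i. a i \<in> LL" "r = (\<Sum>i<n. a i * ps^i) + of_int NN * c"
    unfolding NF1_def by blast
  define a' where "a' i = (case i of 0 \<Rightarrow> 0 | Suc j \<Rightarrow> a j)" for i
  have "(\<Sum>i<Suc n. a' i * ps^i) = a' 0 * ps^0 + (\<Sum>i<n. a' (Suc i) * ps^(Suc i))"
    by (rule sum.lessThan_Suc_shift)
  also have "\<dots> = ps * (\<Sum>i<n. a i * ps^i)"
    by (simp add: a'_def sum_distrib_left algebra_simps)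
  finally have "ps * r = (\<Sum>i<Suc n. a' i * ps^i) + of_int NN * (ps * c)"
    unfolding r(2) by (simp add: algebra_simps)
  moreover have "\<forall>i. a' i \<in> LL" using r by (auto simp: a'_def LL_0 split: nat.split)
  ultimately show ?thesis unfolding NF1_def by blast
qed

lemma NF1_N: "of_int NN * c \<in> NF1"
  unfolding NF1_def by (rule CollectI, rule exI[of _ 0], rule exI[of _ "\<lambda>_. 0"], rule exI[of _ c]) (simp add: LL_0)

lemma NF1_0: "0 \<in> NF1" using NF1_N[of 0] by simp

lemma NF1_LL: "l \<in> LL \<Longrightarrow> l \<in> NF1"
  unfolding NF1_def by (rule CollectI, rule exI[of _ 1], rule exI[of _ "\<lambda>_. l"], rule exI[of _ 0]) simp

lemma NF1_sum: "(\<And>i. i \<in> A \<Longrightarrow> f i \<in> NF1) \<Longrightarrow> sum f A \<in> NF1"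
  by (induction A rule: infinite_finite_induct) (auto intro: NF1_add NF1_0)

lemma NF1_pspow_mult: "r \<in> NF1 \<Longrightarrow> ps^i * r \<in> NF1"
  by (induction i) (auto simp: mult.assoc intro: NF1_psmult)

lemma NF1_mult: "r \<in> NF1 \<Longrightarrow> s \<in> NF1 \<Longrightarrow> r * s \<in> NF1"
proof -
  assume "r \<in> NF1" "s \<in> NF1"
  then obtain n a c where r: "\<forall>i. a i \<in> LL" "r = (\<Sum>i<n. a i * ps^i) + of_int NN * c"
    unfolding NF1_def by blast
  have "r * s = (\<Sum>i<n. a i * (ps^i * s)) + of_int NN * (c * s)"
    unfolding r(2) by (simp add: distrib_right sum_distrib_right sum_distrib_left algebra_simps)
  moreover have "(\<Sum>i<n. a i * (ps^i * s)) \<in> NF1"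
    using r(1) \<open>s \<in> NF1\<close> by (intro NF1_sum NF1_LLmult NF1_pspow_mult) auto
  ultimately show ?thesis by (simp add: NF1_add NF1_N)
qed

lemma RR_NF1: "r \<in> RR \<Longrightarrow> r \<in> NF1"
proof (induction rule: RR.induct)
  case (RR_ps)
  have "ps * 1 \<in> NF1" by (rule NF1_psmult[OF NF1_LL[OF LL_1]])
  then show ?case by simp
qed (auto intro: NF1_add NF1_mult NF1_N NF1_LL LL_const LL_X LL_Xi LL_il)

end


context psictx
begin

definition NF2 :: "int fls set" where
  "NF2 = {r. \<exists>a c. (\<forall>i. a i \<in> LL) \<and> r = (\<Sum>i<2*m. a i * ps^i) + of_int NN * c}"

lemma NF2_add: "r \<in> NF2 \<Longrightarrow> s \<in> NF2 \<Longrightarrow> r + s \<in> NF2"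
proof -
  assume "r \<in> NF2" "s \<in> NF2"
  then obtain a c b c' where r: "\<forall>i. a i \<in> LL" "r = (\<Sum>i<2*m. a i * ps^i) + of_int NN * c"
    and s: "\<forall>i. b i \<in> LL" "s = (\<Sum>i<2*m. b i * ps^i) + of_int NN * c'"
    unfolding NF2_def by blast
  have "r + s = (\<Sum>i<2*m. (a i + b i) * ps^i) + of_int NN * (c + c')"
    unfolding r(2) s(2) by (simp add: distrib_right sum.distrib algebra_simps)
  moreover have "\<forall>i. a i + b i \<in> LL" using r s by (auto intro: LL_add)
  ultimately show ?thesis unfolding NF2_def
    by (intro CollectI exI[of _ "\<lambda>i. a i + b i"] exI[of _ "c + c'"]) simp
qed

lemma NF2_LLmult: "l \<in> LL \<Longrightarrow> r \<in> NF2 \<Longrightarrow> l * r \<in> NF2"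
proof -
  assume l: "l \<in> LL" "r \<in> NF2"
  then obtain a c where r: "\<forall>i. a i \<in> LL" "r = (\<Sum>i<2*m. a i * ps^i) + of_int NN * c"
    unfolding NF2_def by blast
  have "l * r = (\<Sum>i<2*m. (l * a i) * ps^i) + of_int NN * (l * c)"
    unfolding r(2) by (simp add: distrib_left sum_distrib_left algebra_simps)
  moreover have "\<forall>i. l * a i \<in> LL" using r l by (auto intro: LL_mult)
  ultimately show ?thesis unfolding NF2_def
    by (intro CollectI exI[of _ "\<lambda>i. l * a i"] exI[of _ "l * c"]) simp
qed

lemma NF2_N: "of_int NN * c \<in> NF2"
  unfolding NF2_def by (rule CollectI, rule exI[of _ "\<lambda>_. 0"], rule exI[of _ c]) (simp add: LL_0)

lemma NF2_0: "0 \<in> NF2" using NF2_N[of 0] by simp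

lemma NF2_sum: "(\<And>i. i \<in> A \<Longrightarrow> f i \<in> NF2) \<Longrightarrow> sum f A \<in> NF2"
  by (induction A rule: infinite_finite_induct) (auto intro: NF2_add NF2_0)

lemma NF2_low: "j < 2*m \<Longrightarrow> ps^j \<in> NF2"
proof -
  assume j: "j < 2*m"
  have "(\<Sum>i<2*m. (if i = j then 1 else 0) * ps^i) = (\<Sum>i<2*m. if i = j then ps^i else 0)"
    by (intro sum.cong) auto
  also have "\<dots> = ps^j" using j by (simp add: sum.delta)
  finally have "ps^j = (\<Sum>i<2*m. (if i = j then 1 else 0) * ps^i) + of_int NN * 0" by simp
  moreover have "\<forall>i. (if i = j then 1 else 0) \<in> LL" by (auto intro: LL_0 LL_1)
  ultimately show ?thesis unfolding NF2_def
    by (intro CollectI exI[of _ "\<lambda>i. if i = j then 1 else 0"] exI[of _ 0]) simp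
qed

lemma ps2m: "\<exists>c. ps^(2*m) = (\<Sum>k<m. il^m * of_nat (m choose k) *
    (\<Sum>i\<le>k. (of_nat (k choose i) * (-1)^(k-i) * y0^i) * ps^(2*i))) + of_int NN * c"
proof -
  have yp: "(y0 * ps^2)^i = y0^i * ps^(2*i)" for i by (simp only: power_mult_distrib power_mult)
  obtain w where w: "v = 3 * w" using v3 by blast
  have vy: "v = y0 * ps^2 - 1" by (simp add: v_def y0_def)
  have "(v + 1)^m = (\<Sum>k\<le>m. of_nat (m choose k) * v^k * 1^(m-k))" by (rule binomial_ring)
  also have "\<dots> = (\<Sum>k<m. of_nat (m choose k) * v^k) + v^m"
    by (simp add: lessThan_Suc_atMost[symmetric])
  also have "v^m = of_int NN * w^m" unfolding w by (simp add: power_mult_distrib NN_fls)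
  finally have b1: "(v + 1)^m = (\<Sum>k<m. of_nat (m choose k) * v^k) + of_int NN * w^m" .
  have b2: "v^k = (\<Sum>i\<le>k. (of_nat (k choose i) * (-1)^(k-i) * y0^i) * ps^(2*i))" for k
  proof -
    have "v^k = (y0 * ps^2 + (-1))^k" by (simp add: vy)
    also have "\<dots> = (\<Sum>i\<le>k. of_nat (k choose i) * (y0 * ps^2)^i * (-1)^(k-i))" by (rule binomial_ring)
    finally show ?thesis by (simp only: yp) (rule sum.cong, simp_all add: mult_ac)
  qed
  have iy: "il * y0 = 1" using y0_il by (simp add: mult.commute)
  have "ps^(2*m) = (il * y0)^m * ps^(2*m)" by (simp add: iy)
  also have "\<dots> = il^m * (y0 * ps^2)^m"
  proof -
    have "ps^(2*m) = (ps^2)^m" by (simp only: power_mult)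
    then show ?thesis by (simp only: power_mult_distrib mult_ac)
  qed
  also have "y0 * ps^2 = v + 1" by (simp add: vy)
  finally have "ps^(2*m) = il^m * ((\<Sum>k<m. of_nat (m choose k) * v^k) + of_int NN * w^m)" unfolding b1 .
  also have "\<dots> = (\<Sum>k<m. il^m * of_nat (m choose k) * v^k) + of_int NN * (il^m * w^m)"
    by (simp add: distrib_left sum_distrib_left mult_ac)
  finally show ?thesis unfolding b2 by blast
qed

lemma NF2_pspow: "ps^j \<in> NF2"
proof (induction j rule: less_induct)
  case (less j)
  show ?case
  proof (cases "j < 2*m")
    case True then show ?thesis by (rule NF2_low)
  next
    case False
    define d where "d = j - 2*m"
    have jd: "j = d + 2*m" using False by (simp add: d_def)
    obtain c where c: "ps^(2*m) = (\<Sum>k<m. il^m * of_nat (m choose k) *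
        (\<Sum>i\<le>k. (of_nat (k choose i) * (-1)^(k-i) * y0^i) * ps^(2*i))) + of_int NN * c"
      using ps2m by blast
    have "ps^j = ps^d * ps^(2*m)" unfolding jd by (simp add: power_add)
    also have "\<dots> = (\<Sum>k<m. (il^m * of_nat (m choose k)) *
        (\<Sum>i\<le>k. (of_nat (k choose i) * (-1)^(k-i) * y0^i) * ps^(d + 2*i))) + of_int NN * (ps^d * c)"
      unfolding c by (simp add: distrib_left sum_distrib_left mult_ac power_add)
    finally have e: "ps^j = \<dots>" .
    have h1: "il^m * of_nat (m choose k) \<in> LL" for k by (intro LL_mult LL_power LL_il LL_of_nat)
    have h2: "of_nat (k choose i) * (-1)^(k-i) * y0^i \<in> LL" for k i
      by (intro LL_mult LL_power LL_of_nat LL_uminus LL_1 LL_y0)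
    have h3: "ps^(d + 2*i) \<in> NF2" if "k < m" "i \<le> k" for k i
    proof -
      have "d + 2*i < j" using that jd by auto
      then show ?thesis by (rule less.IH)
    qed
    show ?thesis unfolding e
      by (intro NF2_add NF2_N NF2_sum NF2_LLmult h1 h2 h3) auto
  qed
qed

lemma NF1_NF2: "r \<in> NF1 \<Longrightarrow> r \<in> NF2"
proof -
  assume "r \<in> NF1"
  then obtain n a c where r: "\<forall>i. a i \<in> LL" "r = (\<Sum>i<n. a i * ps^i) + of_int NN * c"
    unfolding NF1_def by blast
  show ?thesis unfolding r(2) using r(1)
    by (intro NF2_add NF2_N NF2_sum NF2_LLmult NF2_pspow) auto
qed

lemma RR_NF2: "r \<in> RR \<Longrightarrow> r \<in> NF2"
  using RR_NF1 NF1_NF2 by blast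

end

theorem theorem6p1:
  fixes \<alpha> \<gamma> :: nat and \<epsilon> :: int and F :: "int fps"
    and c0 c1 c2 :: "int poly" and Q :: intpolyQ
  assumes "\<alpha> > 0" and "\<gamma> > 0" and "\<epsilon> \<in> {1, -1}"
    and "eqn_lhs c2 c1 c0 Q F = 0"
    and "\<exists>e1 e2::nat. poly_cong 3 c2 (monom 1 e1 * lin \<epsilon> \<gamma> ^ e2)"
    and "\<exists>f1 f2::nat. poly_cong 3 (c1 ^ 2 - c0 * c2)
                          (monom 1 (2 * f1) * lin \<epsilon> \<gamma> ^ (2 * f2 + 1))"
    and "\<forall>G H. fps_cong (3 ^ (3 ^ \<alpha>)) (eqn_lhs c2 c1 c0 Q G) 0
              \<and> fps_cong (3 ^ (3 ^ \<alpha>)) (eqn_lhs c2 c1 c0 Q H) 0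
              \<longrightarrow> fps_cong (3 ^ (3 ^ \<alpha>)) G H"
  shows "\<exists>(p :: nat \<Rightarrow> int poly) (k :: nat \<Rightarrow> nat) (l :: nat \<Rightarrow> nat).
           fls_cong (3 ^ (3 ^ \<alpha>)) (fps_to_fls F)
             (\<Sum>i<2 * 3 ^ \<alpha>.
                fls_shift (int (k i)) (fps_to_fls (fps_of_poly (p i) * inv_lin \<epsilon> \<gamma> ^ l i))
                * fps_to_fls (psi \<epsilon> \<gamma> ^ i))"
proof -
  let ?m = "3 ^ \<alpha> :: nat"
  obtain e1 e2 :: nat where he: "poly_cong 3 c2 (monom 1 e1 * lin \<epsilon> \<gamma> ^ e2)" using assms(5) by blast
  obtain f1 f2 :: nat where hf: "poly_cong 3 (c1 ^ 2 - c0 * c2) (monom 1 (2 * f1) * lin \<epsilon> \<gamma> ^ (2 * f2 + 1))"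
    using assms(6) by blast
  interpret P: psictx \<epsilon> \<gamma> ?m by unfold_locales (use assms(2) in simp_all)
  obtain p2 where p2: "polyf c2 = polyf (monom 1 e1 * lin \<epsilon> \<gamma> ^ e2) + 3 * polyf p2"
    using poly_cong_ex[OF he] by blast
  obtain q3 where q3: "polyf (c1 ^ 2 - c0 * c2) = polyf (monom 1 (2 * f1) * lin \<epsilon> \<gamma> ^ (2 * f2 + 1)) + 3 * polyf q3"
    using poly_cong_ex[OF hf] by blast
  have hc2: "polyf c2 = fls_X^e1 * (1 + P.xl 0)^e2 + 3 * polyf p2"
    using p2 by (simp add: polyf_mult polyf_monom polyf_power P.polyf_lin P.y0_def)
  have hD: "polyf c1^2 - polyf c0 * polyf c2 = fls_X^(2*f1) * (1 + P.xl 0)^(2*f2+1) + 3 * polyf q3"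
    using q3 by (simp add: polyf_mult polyf_monom polyf_power polyf_diff P.polyf_lin P.y0_def)
  have hF: "EL c2 c1 c0 Q (fps_to_fls F) = 0"
    using assms(4) EL_fps[of c2 c1 c0 Q F] by simp
  interpret M: mainctx \<epsilon> \<gamma> ?m c0 c1 c2 Q F e1 e2 f1 f2 p2 q3
    by unfold_locales (use assms(2) hc2 hD hF in simp_all)
  obtain \<sigma> :: int where \<sigma>: "\<sigma> = 1 \<or> \<sigma> = -1" "cd 3 (M.T - of_int \<sigma> * M.S0)"
    using M.sigma_ex by blast
  let ?s = "of_int \<sigma> :: int fls"
  have s2: "?s^2 = 1" using \<sigma>(1) by auto
  have sR: "?s \<in> P.RR" by (rule P.RR_of_int)
  obtain G where G: "G \<in> P.RR" "EL c2 c1 c0 Q G \<in> P.JJ (Suc (?m - 1))" "G - M.G0 ?s \<in> P.JJ 1"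
    using P.hensel[OF M.G0_RR[OF s2 \<sigma>(2) sR] M.W_RR[OF s2 \<sigma>(2) sR] M.EL_G0[OF s2 \<sigma>(2) sR] M.W_cond[OF s2 \<sigma>(2) sR]]
    by blast
  have sm: "Suc (?m - 1) = ?m" by simp
  have c1: "cd P.NN (EL c2 c1 c0 Q G)"
    using P.J_cd[OF G(2)[unfolded sm]] by (simp add: P.NN_def)
  have "cd (3^1) (G - M.G0 ?s)" by (rule P.J_cd[OF G(3)]) simp
  then have c3: "cd 3 (G - M.G0 ?s)" by simp
  have c2: "cd 3 (G - fps_to_fls F)"
    using cd_diff[OF c3 M.F_G0[OF s2 \<sigma>(2) sR]] by (simp add: algebra_simps)
  have fin: "cd P.NN (G - fps_to_fls F)" by (rule M.lift[OF c1 c2])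
  have "G \<in> P.NF2" by (rule P.RR_NF2[OF G(1)])
  then obtain a c where ac: "\<forall>i. a i \<in> P.LL" "G = (\<Sum>i<2*?m. a i * P.ps^i) + of_int P.NN * c"
    unfolding P.NF2_def by blast
  have "\<forall>i. \<exists>kpl :: nat \<times> int poly \<times> nat. a i = fls_X_inv^(fst kpl) * polyf (fst (snd kpl)) * P.il^(snd (snd kpl))"
    using ac(1) unfolding P.LL_def by fastforce
  then obtain kpl :: "nat \<Rightarrow> nat \<times> int poly \<times> nat" where
    kpl: "\<And>i. a i = fls_X_inv^(fst (kpl i)) * polyf (fst (snd (kpl i))) * P.il^(snd (snd (kpl i)))"
    by metis
  define p where "p i = fst (snd (kpl i))" for i
  define k where "k i = fst (kpl i)" for i
  define l where "l i = snd (snd (kpl i))" for i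
  have tmx: "fls_shift (int (k i)) (fps_to_fls (fps_of_poly (p i) * inv_lin \<epsilon> \<gamma> ^ l i))
      * fps_to_fls (psi \<epsilon> \<gamma> ^ i) = a i * P.ps^i" for i
    by (simp add: kpl k_def p_def l_def fls_X_inv_power_times_conv_shift(1)[symmetric] polyf_def
        P.il_def P.ps_def fls_times_fps_to_fls fps_to_fls_power mult.assoc)
  have "(\<Sum>i<2 * 3 ^ \<alpha>. fls_shift (int (k i)) (fps_to_fls (fps_of_poly (p i) * inv_lin \<epsilon> \<gamma> ^ l i))
                * fps_to_fls (psi \<epsilon> \<gamma> ^ i)) = G - of_int P.NN * c"
    using ac(2) by (simp add: tmx)
  moreover have "cd P.NN (fps_to_fls F - (G - of_int P.NN * c))"
    using cd_diff[OF cd_of_int_mult[of P.NN c] fin] by (simp add: algebra_simps)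
  ultimately have "cd (3 ^ (3 ^ \<alpha>)) (fps_to_fls F - (\<Sum>i<2 * 3 ^ \<alpha>. fls_shift (int (k i)) (fps_to_fls (fps_of_poly (p i) * inv_lin \<epsilon> \<gamma> ^ l i))
                * fps_to_fls (psi \<epsilon> \<gamma> ^ i)))"
    by (simp add: P.NN_def)
  then have "fls_cong (3 ^ (3 ^ \<alpha>)) (fps_to_fls F)
             (\<Sum>i<2 * 3 ^ \<alpha>.
                fls_shift (int (k i)) (fps_to_fls (fps_of_poly (p i) * inv_lin \<epsilon> \<gamma> ^ l i))
                * fps_to_fls (psi \<epsilon> \<gamma> ^ i))"
    unfolding fls_cong_def cd_def by (simp add: cong_iff_dvd_diff)
  then show ?thesis by blast
qed

end
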